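(* Let $p$ be a prime and let $G$ be a finite $p$-group which is metabelian and $p$-central. Then $\exp(G\wedge G)$ divides $\exp(G)$.
   Context: $G$ is $p$-central if $x^p$ lies in the center $Z(G)$ for every $x\in G$ (equivalently $G^p\subseteq Z(G)$). Metabelian means $[G,G]$ is abelian. Conventions: ${}^g h = ghg^{-1}$, $[g,h]=ghg^{-1}h^{-1}$. The nonabelian tensor square $G\otimes G$ is generated by symbols $g\otimes h$ subject to $gg'\otimes h=({}^g g'\otimes {}^g h)(g\otimes h)$ and $g\otimes hh'=(g\otimes h)({}^h g\otimes {}^h h')$; the exterior square $G\wedge G$ is its quotient by the subgroup generated by all $x\otimes x$. *)

theory Defs
  imports "HOL-Algebra.Algebra"
begin

definition group_center :: "('a, 'b) monoid_scheme \<Rightarrow> 'a set" where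
  "group_center G = {z \<in> carrier G. \<forall>x \<in> carrier G. z \<otimes>\<^bsub>G\<^esub> x = x \<otimes>\<^bsub>G\<^esub> z}"

definition finite_p_group :: "('a, 'b) monoid_scheme \<Rightarrow> nat \<Rightarrow> bool" where
  "finite_p_group G p \<longleftrightarrow> group G \<and> finite (carrier G) \<and> (\<exists>n. order G = p ^ n)"

definition metabelian :: "('a, 'b) monoid_scheme \<Rightarrow> bool" where
  "metabelian G \<longleftrightarrow> (\<forall>a \<in> derived G (carrier G). \<forall>b \<in> derived G (carrier G).
       a \<otimes>\<^bsub>G\<^esub> b = b \<otimes>\<^bsub>G\<^esub> a)"

definition p_central :: "('a, 'b) monoid_scheme \<Rightarrow> nat \<Rightarrow> bool" where
  "p_central G p \<longleftrightarrow> (\<forall>x \<in> carrier G. x [^]\<^bsub>G\<^esub> (p::nat) \<in> group_center G)"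

definition group_exponent :: "('a, 'b) monoid_scheme \<Rightarrow> nat" where
  "group_exponent G =
     (if \<exists>n::nat>0. \<forall>x \<in> carrier G. x [^]\<^bsub>G\<^esub> n = \<one>\<^bsub>G\<^esub>
      then (LEAST n::nat. n > 0 \<and> (\<forall>x \<in> carrier G. x [^]\<^bsub>G\<^esub> n = \<one>\<^bsub>G\<^esub>))
      else 0)"

definition conjg :: "('a, 'b) monoid_scheme \<Rightarrow> 'a \<Rightarrow> 'a \<Rightarrow> 'a" where
  "conjg G g h = g \<otimes>\<^bsub>G\<^esub> h \<otimes>\<^bsub>G\<^esub> inv\<^bsub>G\<^esub> g"

text \<open>Words in the free group on symbols g\<otimes>h (g,h \<in> G): a letter ((g,h),True)
  stands for the generator g\<otimes>h, ((g,h),False) for its inverse; the product is concatenation.\<close>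
type_synonym 'a ext_word = "(('a \<times> 'a) \<times> bool) list"

definition good_word :: "('a, 'b) monoid_scheme \<Rightarrow> 'a ext_word \<Rightarrow> bool" where
  "good_word G w \<longleftrightarrow> (\<forall>l \<in> set w. fst (fst l) \<in> carrier G \<and> snd (fst l) \<in> carrier G)"

definition gen :: "'a \<Rightarrow> 'a \<Rightarrow> 'a ext_word" where
  "gen g h = [((g, h), True)]"

inductive ext_eqv :: "('a, 'b) monoid_scheme \<Rightarrow> 'a ext_word \<Rightarrow> 'a ext_word \<Rightarrow> bool"
  for G where
  refl: "ext_eqv G w w"
| sym: "ext_eqv G u v \<Longrightarrow> ext_eqv G v u"
| trans: "ext_eqv G u v \<Longrightarrow> ext_eqv G v w \<Longrightarrow> ext_eqv G u w"
| cong: "ext_eqv G u v \<Longrightarrow> ext_eqv G (a @ u @ b) (a @ v @ b)"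
| cancel: "g \<in> carrier G \<Longrightarrow> h \<in> carrier G \<Longrightarrow>
     ext_eqv G [((g, h), e), ((g, h), \<not> e)] []"
| rel_left: "g \<in> carrier G \<Longrightarrow> g' \<in> carrier G \<Longrightarrow> h \<in> carrier G \<Longrightarrow>
     ext_eqv G (gen (g \<otimes>\<^bsub>G\<^esub> g') h) (gen (conjg G g g') (conjg G g h) @ gen g h)"
| rel_right: "g \<in> carrier G \<Longrightarrow> h \<in> carrier G \<Longrightarrow> h' \<in> carrier G \<Longrightarrow>
     ext_eqv G (gen g (h \<otimes>\<^bsub>G\<^esub> h')) (gen g h @ gen (conjg G h g) (conjg G h h'))"
| rel_ext: "x \<in> carrier G \<Longrightarrow> ext_eqv G (gen x x) []"

definition ext_class :: "('a, 'b) monoid_scheme \<Rightarrow> 'a ext_word \<Rightarrow> 'a ext_word set" where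
  "ext_class G w = {v. ext_eqv G v w}"

definition ext_mult :: "('a, 'b) monoid_scheme \<Rightarrow> 'a ext_word set \<Rightarrow> 'a ext_word set \<Rightarrow> 'a ext_word set" where
  "ext_mult G A B = {v. \<exists>x \<in> A. \<exists>y \<in> B. ext_eqv G v (x @ y)}"

definition exterior_square :: "('a, 'b) monoid_scheme \<Rightarrow> 'a ext_word set monoid" where
  "exterior_square G =
     \<lparr> carrier = ext_class G ` {w. good_word G w},
       monoid.mult = ext_mult G,
       one = ext_class G [] \<rparr>"

end

theory Submission
  imports Defs
begin

lemma ext_eqv_app_left: "ext_eqv G u v \<Longrightarrow> ext_eqv G (a @ u) (a @ v)"
  using ext_eqv.cong[of G u v a "[]"] by simp

lemma ext_eqv_app_right: "ext_eqv G u v \<Longrightarrow> ext_eqv G (u @ b) (v @ b)"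
  using ext_eqv.cong[of G u v "[]" b] by simp

lemma ext_eqv_app: "ext_eqv G u v \<Longrightarrow> ext_eqv G u' v' \<Longrightarrow> ext_eqv G (u @ u') (v @ v')"
  by (meson ext_eqv.trans ext_eqv_app_left ext_eqv_app_right)

lemma ext_class_eq_iff: "ext_class G u = ext_class G v \<longleftrightarrow> ext_eqv G u v"
proof
  assume "ext_class G u = ext_class G v"
  moreover have "u \<in> ext_class G u" unfolding ext_class_def by (simp add: ext_eqv.refl)
  ultimately show "ext_eqv G u v" unfolding ext_class_def by auto
next
  assume "ext_eqv G u v"
  then show "ext_class G u = ext_class G v" unfolding ext_class_def
    by (auto intro: ext_eqv.trans ext_eqv.sym)
qed

lemma ext_class_mem: "w \<in> ext_class G w"
  unfolding ext_class_def by (simp add: ext_eqv.refl)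

lemma ext_mult_class: "ext_mult G (ext_class G u) (ext_class G v) = ext_class G (u @ v)"
proof -
  have "ext_eqv G z (u @ v)" if "x \<in> ext_class G u" "y \<in> ext_class G v" "ext_eqv G z (x @ y)" for x y z
    using that unfolding ext_class_def by simp (meson ext_eqv.trans ext_eqv_app)
  moreover have "ext_eqv G z (u @ v) \<Longrightarrow> \<exists>x\<in>ext_class G u. \<exists>y\<in>ext_class G v. ext_eqv G z (x @ y)" for z
    using ext_class_mem by blast
  ultimately show ?thesis unfolding ext_mult_def ext_class_def by auto
qed

definition winv :: "'a ext_word \<Rightarrow> 'a ext_word" where
  "winv w = rev (map (\<lambda>(l, b). (l, \<not> b)) w)"

lemma winv_Nil[simp]: "winv [] = []" by (simp add: winv_def)
lemma winv_Cons: "winv (a # w) = winv w @ [(fst a, \<not> snd a)]"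
  by (cases a) (simp add: winv_def)
lemma winv_append: "winv (u @ v) = winv v @ winv u"
  by (simp add: winv_def)

lemma good_word_Nil[simp]: "good_word G []" by (simp add: good_word_def)
lemma good_word_append[simp]: "good_word G (u @ v) \<longleftrightarrow> good_word G u \<and> good_word G v"
  by (auto simp add: good_word_def)
lemma good_word_Cons: "good_word G (a # w) \<longleftrightarrow> fst (fst a) \<in> carrier G \<and> snd (fst a) \<in> carrier G \<and> good_word G w"
  by (auto simp add: good_word_def)
lemma good_winv[simp]: "good_word G (winv w) = good_word G w"
  by (auto simp add: good_word_def winv_def)
lemma good_gen[simp]: "good_word G (gen g h) \<longleftrightarrow> g \<in> carrier G \<and> h \<in> carrier G"
  by (simp add: good_word_def gen_def)

lemma winv_cancel: "good_word G w \<Longrightarrow> ext_eqv G (winv w @ w) []"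
proof (induction w)
  case Nil then show ?case by (simp add: ext_eqv.refl)
next
  case (Cons a w)
  obtain g h b where a: "a = ((g, h), b)" by (metis prod.collapse)
  from Cons.prems a have gh: "g \<in> carrier G" "h \<in> carrier G" "good_word G w"
    by (auto simp add: good_word_Cons)
  have "winv (a # w) @ a # w = winv w @ [((g,h), \<not> b), ((g,h), \<not> \<not> b)] @ w"
    by (simp add: winv_Cons a)
  moreover have "ext_eqv G (winv w @ [((g,h), \<not> b), ((g,h), \<not> \<not> b)] @ w) (winv w @ [] @ w)"
    by (rule ext_eqv.cong[OF ext_eqv.cancel[OF gh(1,2)]])
  ultimately show ?case using Cons.IH[OF gh(3)] by (auto intro: ext_eqv.trans)
qed

lemma winv_cancel': "good_word G w \<Longrightarrow> ext_eqv G (w @ winv w) []"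
proof -
  assume "good_word G w"
  hence "good_word G (winv w)" by simp
  hence "ext_eqv G (winv (winv w) @ winv w) []" by (rule winv_cancel)
  moreover have "winv (winv w) = w" by (simp add: winv_def rev_map comp_def case_prod_beta)
  ultimately show ?thesis by simp
qed

abbreviation W :: "('a, 'b) monoid_scheme \<Rightarrow> 'a ext_word set monoid" where
  "W G \<equiv> exterior_square G"

lemma W_carrier: "carrier (W G) = ext_class G ` {w. good_word G w}"
  by (simp add: exterior_square_def)
lemma W_mult: "A \<otimes>\<^bsub>W G\<^esub> B = ext_mult G A B"
  by (simp add: exterior_square_def)
lemma W_one: "\<one>\<^bsub>W G\<^esub> = ext_class G []"
  by (simp add: exterior_square_def)

lemma W_mult_class: "ext_class G u \<otimes>\<^bsub>W G\<^esub> ext_class G v = ext_class G (u @ v)"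
  by (simp add: W_mult ext_mult_class)

lemma W_class_in: "good_word G w \<Longrightarrow> ext_class G w \<in> carrier (W G)"
  by (simp add: W_carrier)

lemma W_group: "group (W G)"
proof (rule groupI)
  fix x y assume "x \<in> carrier (W G)" "y \<in> carrier (W G)"
  then show "x \<otimes>\<^bsub>W G\<^esub> y \<in> carrier (W G)"
    by (auto simp add: W_carrier W_mult_class)
next
  show "\<one>\<^bsub>W G\<^esub> \<in> carrier (W G)" by (simp add: W_one W_carrier)
next
  fix x y z assume "x \<in> carrier (W G)" "y \<in> carrier (W G)" "z \<in> carrier (W G)"
  then show "x \<otimes>\<^bsub>W G\<^esub> y \<otimes>\<^bsub>W G\<^esub> z = x \<otimes>\<^bsub>W G\<^esub> (y \<otimes>\<^bsub>W G\<^esub> z)"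
    by (auto simp add: W_carrier W_mult_class)
next
  fix x assume "x \<in> carrier (W G)"
  then show "\<one>\<^bsub>W G\<^esub> \<otimes>\<^bsub>W G\<^esub> x = x"
    by (auto simp add: W_carrier W_mult_class W_one)
next
  fix x assume "x \<in> carrier (W G)"
  then obtain w where w: "good_word G w" "x = ext_class G w" by (auto simp add: W_carrier)
  show "\<exists>y\<in>carrier (W G). y \<otimes>\<^bsub>W G\<^esub> x = \<one>\<^bsub>W G\<^esub>"
  proof (intro bexI)
    show "ext_class G (winv w) \<otimes>\<^bsub>W G\<^esub> x = \<one>\<^bsub>W G\<^esub>"
      using w winv_cancel[OF w(1)] by (simp add: W_mult_class W_one ext_class_eq_iff)
    show "ext_class G (winv w) \<in> carrier (W G)" using w by (simp add: W_class_in)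
  qed
qed


definition wg :: "('a, 'b) monoid_scheme \<Rightarrow> 'a \<Rightarrow> 'a \<Rightarrow> 'a ext_word set" where
  "wg G g h = ext_class G (gen g h)"

definition gcomm :: "('a, 'b) monoid_scheme \<Rightarrow> 'a \<Rightarrow> 'a \<Rightarrow> 'a" where
  "gcomm G a b = a \<otimes>\<^bsub>G\<^esub> b \<otimes>\<^bsub>G\<^esub> inv\<^bsub>G\<^esub> a \<otimes>\<^bsub>G\<^esub> inv\<^bsub>G\<^esub> b"

definition mword :: "('a, 'b) monoid_scheme \<Rightarrow> 'a \<Rightarrow> 'a ext_word \<Rightarrow> 'a ext_word" where
  "mword G x w = map (\<lambda>((g, h), b). ((conjg G x g, conjg G x h), b)) w"

definition act :: "('a, 'b) monoid_scheme \<Rightarrow> 'a \<Rightarrow> 'a ext_word set \<Rightarrow> 'a ext_word set" where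
  "act G x A = ext_class G (mword G x (SOME w. w \<in> A))"

definition lval :: "('a, 'b) monoid_scheme \<Rightarrow> ('a \<times> 'a) \<times> bool \<Rightarrow> 'a" where
  "lval G a = (case a of ((g, h), b) \<Rightarrow>
     (if g \<in> carrier G \<and> h \<in> carrier G
      then (if b then gcomm G g h else inv\<^bsub>G\<^esub> (gcomm G g h)) else \<one>\<^bsub>G\<^esub>))"

fun evl :: "('a, 'b) monoid_scheme \<Rightarrow> 'a ext_word \<Rightarrow> 'a" where
  "evl G [] = \<one>\<^bsub>G\<^esub>"
| "evl G (a # w) = lval G a \<otimes>\<^bsub>G\<^esub> evl G w"

definition kappa :: "('a, 'b) monoid_scheme \<Rightarrow> 'a ext_word set \<Rightarrow> 'a" where
  "kappa G A = evl G (SOME w. w \<in> A)"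

lemma wg_in_W: "g \<in> carrier G \<Longrightarrow> h \<in> carrier G \<Longrightarrow> wg G g h \<in> carrier (W G)"
  unfolding wg_def by (rule W_class_in) simp

lemma W_induct[consumes 1, case_names one mul mulinv]:
  assumes "x \<in> carrier (W G)"
    and "P \<one>\<^bsub>W G\<^esub>"
    and "\<And>A g h. A \<in> carrier (W G) \<Longrightarrow> P A \<Longrightarrow> g \<in> carrier G \<Longrightarrow> h \<in> carrier G \<Longrightarrow> P (A \<otimes>\<^bsub>W G\<^esub> wg G g h)"
    and "\<And>A g h. A \<in> carrier (W G) \<Longrightarrow> P A \<Longrightarrow> g \<in> carrier G \<Longrightarrow> h \<in> carrier G \<Longrightarrow> P (A \<otimes>\<^bsub>W G\<^esub> inv\<^bsub>W G\<^esub> (wg G g h))"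
  shows "P x"
proof -
  interpret WG: group "W G" by (rule W_group)
  obtain w where w: "good_word G w" "x = ext_class G w" using assms(1) by (auto simp add: W_carrier)
  have "good_word G w \<Longrightarrow> P (ext_class G w)"
  proof (induction w rule: rev_induct)
    case Nil then show ?case using assms(2) by (simp add: W_one)
  next
    case (snoc a w)
    obtain g h b where a: "a = ((g, h), b)" by (metis prod.collapse)
    from snoc.prems a have gh: "g \<in> carrier G" "h \<in> carrier G" "good_word G w"
      by (auto simp add: good_word_def)
    have Pw: "P (ext_class G w)" using snoc.IH gh(3) by simp
    have cw: "ext_class G w \<in> carrier (W G)" using gh(3) by (rule W_class_in)
    show ?case
    proof (cases b)
      case True
      have "ext_class G (w @ [a]) = ext_class G w \<otimes>\<^bsub>W G\<^esub> wg G g h"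
        by (simp add: W_mult_class wg_def gen_def a True)
      then show ?thesis using assms(3)[OF cw Pw gh(1,2)] by simp
    next
      case False
      have "ext_class G [((g,h),False)] \<otimes>\<^bsub>W G\<^esub> wg G g h = \<one>\<^bsub>W G\<^esub>"
        unfolding wg_def gen_def W_mult_class W_one ext_class_eq_iff
        using ext_eqv.cancel[OF gh(1,2), of False] by simp
      moreover have "ext_class G [((g,h),False)] \<in> carrier (W G)"
        by (rule W_class_in) (simp add: good_word_def gh)
      ultimately have "ext_class G [((g,h),False)] = inv\<^bsub>W G\<^esub> (wg G g h)"
        using wg_in_W[OF gh(1,2)] by (simp add: WG.inv_equality)
      moreover have "ext_class G (w @ [a]) = ext_class G w \<otimes>\<^bsub>W G\<^esub> ext_class G [((g,h),False)]"
        by (simp add: W_mult_class a False)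
      ultimately show ?thesis using assms(4)[OF cw Pw gh(1,2)] by simp
    qed
  qed
  then show ?thesis using w by simp
qed

context group
begin

lemma cancel_l1 [simp]: "x \<in> carrier G \<Longrightarrow> y \<in> carrier G \<Longrightarrow> x \<otimes> (inv x \<otimes> y) = y"
  by (simp add: m_assoc[symmetric])
lemma cancel_l2 [simp]: "x \<in> carrier G \<Longrightarrow> y \<in> carrier G \<Longrightarrow> inv x \<otimes> (x \<otimes> y) = y"
  by (simp add: m_assoc[symmetric])

lemma conjg_closed [simp]: "x \<in> carrier G \<Longrightarrow> a \<in> carrier G \<Longrightarrow> conjg G x a \<in> carrier G"
  by (simp add: conjg_def)
lemma conjg_mult: "x \<in> carrier G \<Longrightarrow> a \<in> carrier G \<Longrightarrow> b \<in> carrier G \<Longrightarrow>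
    conjg G x (a \<otimes> b) = conjg G x a \<otimes> conjg G x b"
  by (simp add: conjg_def m_assoc)
lemma conjg_conjg: "x \<in> carrier G \<Longrightarrow> y \<in> carrier G \<Longrightarrow> a \<in> carrier G \<Longrightarrow>
    conjg G x (conjg G y a) = conjg G (x \<otimes> y) a"
  by (simp add: conjg_def m_assoc inv_mult_group)
lemma conjg_one [simp]: "a \<in> carrier G \<Longrightarrow> conjg G \<one> a = a"
  by (simp add: conjg_def)
lemma conjg_of_one [simp]: "x \<in> carrier G \<Longrightarrow> conjg G x \<one> = \<one>"
  by (simp add: conjg_def)
lemma conjg_inv: "x \<in> carrier G \<Longrightarrow> a \<in> carrier G \<Longrightarrow> conjg G x (inv a) = inv (conjg G x a)"
  by (simp add: conjg_def m_assoc inv_mult_group)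
lemma conjg_self [simp]: "x \<in> carrier G \<Longrightarrow> conjg G x x = x"
  by (simp add: conjg_def m_assoc)

lemma gcomm_closed [simp]: "a \<in> carrier G \<Longrightarrow> b \<in> carrier G \<Longrightarrow> gcomm G a b \<in> carrier G"
  by (simp add: gcomm_def)

lemma mword_good: "x \<in> carrier G \<Longrightarrow> good_word G w \<Longrightarrow> good_word G (mword G x w)"
  by (auto simp add: good_word_def mword_def)

lemma mword_append: "mword G x (u @ v) = mword G x u @ mword G x v"
  by (simp add: mword_def)

lemma mword_gen: "mword G x (gen g h) = gen (conjg G x g) (conjg G x h)"
  by (simp add: mword_def gen_def)

lemma mword_eqv:
  assumes x: "x \<in> carrier G" and "ext_eqv G u v"
  shows "ext_eqv G (mword G x u) (mword G x v)"
  using assms(2)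
proof (induction rule: ext_eqv.induct)
  case (refl w) then show ?case by (rule ext_eqv.refl)
next
  case (sym u v) show ?case using sym.IH by (rule ext_eqv.sym)
next
  case (trans u v w) show ?case using trans.IH by (rule ext_eqv.trans)
next
  case (cong u v a b) then show ?case by (simp add: mword_append ext_eqv.cong)
next
  case (cancel g h e)
  then show ?case using ext_eqv.cancel[of "conjg G x g" G "conjg G x h" e] x
    by (simp add: mword_def)
next
  case (rel_left g g' h)
  have "ext_eqv G (gen (conjg G x g \<otimes> conjg G x g') (conjg G x h))
     (gen (conjg G (conjg G x g) (conjg G x g')) (conjg G (conjg G x g) (conjg G x h)) @ gen (conjg G x g) (conjg G x h))"
    by (rule ext_eqv.rel_left) (use rel_left x in auto)
  moreover have "conjg G (conjg G x g) (conjg G x g') = conjg G x (conjg G g g')"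
    "conjg G (conjg G x g) (conjg G x h) = conjg G x (conjg G g h)"
    using rel_left x by (simp_all add: conjg_def m_assoc inv_mult_group)
  ultimately show ?case using rel_left x by (simp add: mword_gen mword_append conjg_mult)
next
  case (rel_right g h h')
  have "ext_eqv G (gen (conjg G x g) (conjg G x h \<otimes> conjg G x h'))
     (gen (conjg G x g) (conjg G x h) @ gen (conjg G (conjg G x h) (conjg G x g)) (conjg G (conjg G x h) (conjg G x h')))"
    by (rule ext_eqv.rel_right) (use rel_right x in auto)
  moreover have "conjg G (conjg G x h) (conjg G x g) = conjg G x (conjg G h g)"
    "conjg G (conjg G x h) (conjg G x h') = conjg G x (conjg G h h')"
    using rel_right x by (simp_all add: conjg_def m_assoc inv_mult_group)
  ultimately show ?case using rel_right x by (simp add: mword_gen mword_append conjg_mult)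
next
  case (rel_ext y)
  have "mword G x (gen y y) = gen (conjg G x y) (conjg G x y)" by (rule mword_gen)
  moreover have "mword G x [] = []" by (simp add: mword_def)
  ultimately show ?case using rel_ext x by (simp add: ext_eqv.rel_ext)
qed

lemma act_class: "x \<in> carrier G \<Longrightarrow> act G x (ext_class G w) = ext_class G (mword G x w)"
proof -
  assume x: "x \<in> carrier G"
  have "(SOME v. v \<in> ext_class G w) \<in> ext_class G w" using ext_class_mem by (rule someI)
  hence "ext_eqv G (SOME v. v \<in> ext_class G w) w" by (simp add: ext_class_def)
  hence "ext_eqv G (mword G x (SOME v. v \<in> ext_class G w)) (mword G x w)" by (rule mword_eqv[OF x])
  then show ?thesis unfolding act_def by (simp add: ext_class_eq_iff)
qed

lemma act_closed [simp]: "x \<in> carrier G \<Longrightarrow> A \<in> carrier (W G) \<Longrightarrow> act G x A \<in> carrier (W G)"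
  by (auto simp add: W_carrier act_class mword_good)

lemma act_mult: "x \<in> carrier G \<Longrightarrow> A \<in> carrier (W G) \<Longrightarrow> B \<in> carrier (W G) \<Longrightarrow>
    act G x (A \<otimes>\<^bsub>W G\<^esub> B) = act G x A \<otimes>\<^bsub>W G\<^esub> act G x B"
  by (auto simp add: W_carrier act_class W_mult_class mword_append)

lemma act_wg: "x \<in> carrier G \<Longrightarrow> act G x (wg G g h) = wg G (conjg G x g) (conjg G x h)"
  by (simp add: wg_def act_class mword_gen)

lemma mword_mult: "x \<in> carrier G \<Longrightarrow> y \<in> carrier G \<Longrightarrow> good_word G w \<Longrightarrow>
    mword G x (mword G y w) = mword G (x \<otimes> y) w"
  by (auto simp add: mword_def good_word_def conjg_conjg split: prod.splits)

lemma act_act: "x \<in> carrier G \<Longrightarrow> y \<in> carrier G \<Longrightarrow> A \<in> carrier (W G) \<Longrightarrow>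
    act G x (act G y A) = act G (x \<otimes> y) A"
  by (auto simp add: W_carrier act_class mword_mult)

lemma act_one: "A \<in> carrier (W G) \<Longrightarrow> act G \<one> A = A"
proof -
  assume "A \<in> carrier (W G)"
  then obtain w where w: "good_word G w" "A = ext_class G w" by (auto simp add: W_carrier)
  have "mword G \<one> w = w" using w(1)
    by (induction w) (auto simp add: mword_def good_word_def)
  then show ?thesis using w by (simp add: act_class)
qed

lemma act_W_one: "x \<in> carrier G \<Longrightarrow> act G x \<one>\<^bsub>W G\<^esub> = \<one>\<^bsub>W G\<^esub>"
  by (simp add: W_one act_class mword_def)

lemma act_inv: "x \<in> carrier G \<Longrightarrow> A \<in> carrier (W G) \<Longrightarrow> act G x (inv\<^bsub>W G\<^esub> A) = inv\<^bsub>W G\<^esub> (act G x A)"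
proof -
  interpret WG: group "W G" by (rule W_group)
  assume x: "x \<in> carrier G" and A: "A \<in> carrier (W G)"
  have "act G x (inv\<^bsub>W G\<^esub> A) \<otimes>\<^bsub>W G\<^esub> act G x A = \<one>\<^bsub>W G\<^esub>"
    using x A by (simp add: act_mult[symmetric] act_W_one)
  then show ?thesis using x A by (simp add: WG.inv_equality)
qed

lemma act_hom: "x \<in> carrier G \<Longrightarrow> act G x \<in> hom (W G) (W G)"
  by (rule homI) (simp_all add: act_mult)

lemma lval_closed [simp]: "lval G a \<in> carrier G"
  by (auto simp add: lval_def split: prod.splits)

lemma evl_closed [simp]: "evl G w \<in> carrier G"
  by (induction w) auto

lemma evl_append: "evl G (u @ v) = evl G u \<otimes> evl G v"
  by (induction u) (auto simp add: m_assoc)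

lemma gcomm_left: "g \<in> carrier G \<Longrightarrow> g' \<in> carrier G \<Longrightarrow> h \<in> carrier G \<Longrightarrow>
   gcomm G (g \<otimes> g') h = gcomm G (conjg G g g') (conjg G g h) \<otimes> gcomm G g h"
  by (simp add: gcomm_def conjg_def m_assoc inv_mult_group)

lemma gcomm_right: "g \<in> carrier G \<Longrightarrow> h \<in> carrier G \<Longrightarrow> h' \<in> carrier G \<Longrightarrow>
   gcomm G g (h \<otimes> h') = gcomm G g h \<otimes> gcomm G (conjg G h g) (conjg G h h')"
  by (simp add: gcomm_def conjg_def m_assoc inv_mult_group)

lemma gcomm_self [simp]: "g \<in> carrier G \<Longrightarrow> gcomm G g g = \<one>"
  by (simp add: gcomm_def m_assoc)

lemma evl_eqv: "ext_eqv G u v \<Longrightarrow> evl G u = evl G v"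
proof (induction rule: ext_eqv.induct)
  case (cong u v a b) then show ?case by (simp add: evl_append)
next
  case (cancel g h e) then show ?case by (cases e) (simp_all add: m_assoc lval_def)
next
  case (rel_left g g' h) then show ?case by (simp add: gen_def gcomm_left m_assoc lval_def)
next
  case (rel_right g h h') then show ?case by (simp add: gen_def gcomm_right m_assoc lval_def)
qed (simp_all add: gen_def lval_def)

lemma kappa_class: "kappa G (ext_class G w) = evl G w"
proof -
  have "(SOME v. v \<in> ext_class G w) \<in> ext_class G w" using ext_class_mem by (rule someI)
  hence "ext_eqv G (SOME v. v \<in> ext_class G w) w" by (simp add: ext_class_def)
  then show ?thesis unfolding kappa_def by (rule evl_eqv)
qed

lemma kappa_closed [simp]: "kappa G A \<in> carrier G"
  by (simp add: kappa_def)

lemma kappa_mult: "A \<in> carrier (W G) \<Longrightarrow> B \<in> carrier (W G) \<Longrightarrow>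
    kappa G (A \<otimes>\<^bsub>W G\<^esub> B) = kappa G A \<otimes> kappa G B"
  by (auto simp add: W_carrier W_mult_class kappa_class evl_append)

lemma kappa_wg: "g \<in> carrier G \<Longrightarrow> h \<in> carrier G \<Longrightarrow> kappa G (wg G g h) = gcomm G g h"
  by (simp add: wg_def kappa_class gen_def lval_def)

lemma kappa_hom: "kappa G \<in> hom (W G) G"
  by (rule homI) (simp_all add: kappa_mult)

lemma kappa_one: "kappa G \<one>\<^bsub>W G\<^esub> = \<one>"
  by (simp add: W_one kappa_class)

lemma kappa_inv: "A \<in> carrier (W G) \<Longrightarrow> kappa G (inv\<^bsub>W G\<^esub> A) = inv (kappa G A)"
proof -
  interpret WG: group "W G" by (rule W_group)
  assume A: "A \<in> carrier (W G)"
  have "kappa G (inv\<^bsub>W G\<^esub> A) \<otimes> kappa G A = \<one>"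
    using A by (simp add: kappa_mult[symmetric] kappa_one)
  then show ?thesis using A by (simp add: inv_equality)
qed

lemma wg_left: "g \<in> carrier G \<Longrightarrow> g' \<in> carrier G \<Longrightarrow> h \<in> carrier G \<Longrightarrow>
   wg G (g \<otimes> g') h = wg G (conjg G g g') (conjg G g h) \<otimes>\<^bsub>W G\<^esub> wg G g h"
  unfolding wg_def W_mult_class ext_class_eq_iff by (rule ext_eqv.rel_left)

lemma wg_right: "g \<in> carrier G \<Longrightarrow> h \<in> carrier G \<Longrightarrow> h' \<in> carrier G \<Longrightarrow>
   wg G g (h \<otimes> h') = wg G g h \<otimes>\<^bsub>W G\<^esub> wg G (conjg G h g) (conjg G h h')"
  unfolding wg_def W_mult_class ext_class_eq_iff by (rule ext_eqv.rel_right)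

lemma wg_self: "x \<in> carrier G \<Longrightarrow> wg G x x = \<one>\<^bsub>W G\<^esub>"
  unfolding wg_def W_one ext_class_eq_iff by (rule ext_eqv.rel_ext)

lemma wg_left': "g \<in> carrier G \<Longrightarrow> g' \<in> carrier G \<Longrightarrow> h \<in> carrier G \<Longrightarrow>
   wg G (g \<otimes> g') h = act G g (wg G g' h) \<otimes>\<^bsub>W G\<^esub> wg G g h"
  by (simp add: wg_left act_wg)

lemma wg_right': "g \<in> carrier G \<Longrightarrow> h \<in> carrier G \<Longrightarrow> h' \<in> carrier G \<Longrightarrow>
   wg G g (h \<otimes> h') = wg G g h \<otimes>\<^bsub>W G\<^esub> act G h (wg G g h')"
  by (simp add: wg_right act_wg)

end


context group
begin

lemma lcancel_iff: "a \<in> carrier G \<Longrightarrow> x \<in> carrier G \<Longrightarrow> y \<in> carrier G \<Longrightarrow> a \<otimes> x = a \<otimes> y \<longleftrightarrow> x = y"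
  by (metis cancel_l2)
lemma rcancel_iff: "a \<in> carrier G \<Longrightarrow> x \<in> carrier G \<Longrightarrow> y \<in> carrier G \<Longrightarrow> x \<otimes> a = y \<otimes> a \<longleftrightarrow> x = y"
  by (metis right_cancel)

interpretation WG: group "W G" by (rule W_group)

lemmas wg_in_W' [simp] = wg_in_W[of _ G]

lemma W_hom_eq:
  assumes f: "f \<in> hom (W G) H" and g: "g \<in> hom (W G) H" and H: "group H"
    and gen: "\<And>a b. a \<in> carrier G \<Longrightarrow> b \<in> carrier G \<Longrightarrow> f (wg G a b) = g (wg G a b)"
    and A: "A \<in> carrier (W G)"
  shows "f A = g A"
  using A
proof (induction rule: W_induct)
  case one
  interpret f: group_hom "W G" H f by (intro group_hom.intro group_hom_axioms.intro W_group H f)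
  interpret g: group_hom "W G" H g by (intro group_hom.intro group_hom_axioms.intro W_group H g)
  show ?case by simp
next
  case (mul A a b)
  interpret f: group_hom "W G" H f by (intro group_hom.intro group_hom_axioms.intro W_group H f)
  interpret g: group_hom "W G" H g by (intro group_hom.intro group_hom_axioms.intro W_group H g)
  show ?case using mul by (simp add: gen)
next
  case (mulinv A a b)
  interpret f: group_hom "W G" H f by (intro group_hom.intro group_hom_axioms.intro W_group H f)
  interpret g: group_hom "W G" H g by (intro group_hom.intro group_hom_axioms.intro W_group H g)
  show ?case using mulinv by (simp add: gen)
qed

lemma wg_one_left [simp]: "h \<in> carrier G \<Longrightarrow> wg G \<one> h = \<one>\<^bsub>W G\<^esub>"
proof -
  assume h: "h \<in> carrier G"
  have "wg G (\<one> \<otimes> \<one>) h = wg G (conjg G \<one> \<one>) (conjg G \<one> h) \<otimes>\<^bsub>W G\<^esub> wg G \<one> h"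
    by (rule wg_left) (use h in auto)
  hence "wg G \<one> h = wg G \<one> h \<otimes>\<^bsub>W G\<^esub> wg G \<one> h" using h by simp
  then show ?thesis using h by simp
qed

lemma wg_one_right [simp]: "g \<in> carrier G \<Longrightarrow> wg G g \<one> = \<one>\<^bsub>W G\<^esub>"
proof -
  assume g: "g \<in> carrier G"
  have "wg G g (\<one> \<otimes> \<one>) = wg G g \<one> \<otimes>\<^bsub>W G\<^esub> wg G (conjg G \<one> g) (conjg G \<one> \<one>)"
    by (rule wg_right) (use g in auto)
  hence "wg G g \<one> = wg G g \<one> \<otimes>\<^bsub>W G\<^esub> wg G g \<one>" using g by simp
  then show ?thesis using g by simp
qed

lemma act_inv_act: "x \<in> carrier G \<Longrightarrow> A \<in> carrier (W G) \<Longrightarrow> act G (inv x) (act G x A) = A"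
  by (simp add: act_act act_one)

lemma act_act_inv: "x \<in> carrier G \<Longrightarrow> A \<in> carrier (W G) \<Longrightarrow> act G x (act G (inv x) A) = A"
  by (simp add: act_act act_one)

lemma act_eq_iff: "x \<in> carrier G \<Longrightarrow> A \<in> carrier (W G) \<Longrightarrow> B \<in> carrier (W G) \<Longrightarrow>
    act G x A = act G x B \<longleftrightarrow> A = B"
  by (metis act_inv_act)

lemma wg_swap: "g \<in> carrier G \<Longrightarrow> h \<in> carrier G \<Longrightarrow> wg G h g = inv\<^bsub>W G\<^esub> (wg G g h)"
proof -
  assume g: "g \<in> carrier G" and h: "h \<in> carrier G"
  have e1: "wg G (g \<otimes> h) (g \<otimes> h) = act G g (wg G h (g \<otimes> h)) \<otimes>\<^bsub>W G\<^esub> wg G g (g \<otimes> h)"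
    using g h by (simp add: wg_left')
  have e2: "wg G h (g \<otimes> h) = wg G h g"
    using g h by (simp add: wg_right' wg_self act_W_one)
  have e3: "wg G g (g \<otimes> h) = act G g (wg G g h)"
    using g h by (simp add: wg_right' wg_self)
  have "act G g (wg G h g \<otimes>\<^bsub>W G\<^esub> wg G g h) = act G g (wg G h g) \<otimes>\<^bsub>W G\<^esub> act G g (wg G g h)"
    using g h by (simp add: act_mult)
  also have "\<dots> = wg G (g \<otimes> h) (g \<otimes> h)" using e1 e2 e3 by simp
  also have "\<dots> = act G g \<one>\<^bsub>W G\<^esub>" using g h by (simp add: wg_self act_W_one)
  finally have "act G g (wg G h g \<otimes>\<^bsub>W G\<^esub> wg G g h) = act G g \<one>\<^bsub>W G\<^esub>" .
  hence "wg G h g \<otimes>\<^bsub>W G\<^esub> wg G g h = \<one>\<^bsub>W G\<^esub>"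
    using g h by (simp add: act_eq_iff)
  then show ?thesis using g h by (simp add: WG.inv_equality)
qed

lemma gcomm_eq: "g \<in> carrier G \<Longrightarrow> h \<in> carrier G \<Longrightarrow> gcomm G g h = (g \<otimes> h) \<otimes> inv (h \<otimes> g)"
  by (simp add: gcomm_def m_assoc inv_mult_group)

lemma CM2_gen_gen:
  assumes g: "g \<in> carrier G" and h: "h \<in> carrier G" and a: "a \<in> carrier G" and b: "b \<in> carrier G"
  shows "act G (gcomm G g h) (wg G a b) \<otimes>\<^bsub>W G\<^esub> wg G g h = wg G g h \<otimes>\<^bsub>W G\<^esub> wg G a b"
proof -
  define k where "k = inv (h \<otimes> g)"
  have k: "k \<in> carrier G" using g h by (simp add: k_def)
  define g' where "g' = conjg G k a"
  define h' where "h' = conjg G k b"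
  have g': "g' \<in> carrier G" and h': "h' \<in> carrier G" using k a b by (simp_all add: g'_def h'_def)
  have V: "act G (h \<otimes> g) (wg G g' h') = wg G a b"
    using g h a b k by (simp add: g'_def h'_def act_wg conjg_conjg k_def)
  have V2: "act G (g \<otimes> h) (wg G g' h') = act G (gcomm G g h) (wg G a b)"
  proof -
    have "act G (gcomm G g h) (wg G a b) = act G (g \<otimes> h \<otimes> k) (act G (h \<otimes> g) (wg G g' h'))"
      using V g h by (simp add: gcomm_eq k_def)
    also have "\<dots> = act G (g \<otimes> h) (wg G g' h')"
      using g h k g' h' by (simp add: act_act m_assoc k_def)
    finally show ?thesis by simp
  qed
  have E1: "wg G (g \<otimes> g') (h \<otimes> h') = act G g (wg G g' h) \<otimes>\<^bsub>W G\<^esub> act G (g \<otimes> h) (wg G g' h')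
        \<otimes>\<^bsub>W G\<^esub> wg G g h \<otimes>\<^bsub>W G\<^esub> act G h (wg G g h')"
  proof -
    have "wg G (g \<otimes> g') (h \<otimes> h') = act G g (wg G g' (h \<otimes> h')) \<otimes>\<^bsub>W G\<^esub> wg G g (h \<otimes> h')"
      using g h g' h' by (intro wg_left') auto
    also have "wg G g' (h \<otimes> h') = wg G g' h \<otimes>\<^bsub>W G\<^esub> act G h (wg G g' h')"
      using g h g' h' by (intro wg_right') auto
    also have "wg G g (h \<otimes> h') = wg G g h \<otimes>\<^bsub>W G\<^esub> act G h (wg G g h')"
      using g h g' h' by (intro wg_right') auto
    finally show ?thesis using g h g' h' by (simp add: act_mult act_act WG.m_assoc)
  qed
  have E2: "wg G (g \<otimes> g') (h \<otimes> h') = act G g (wg G g' h) \<otimes>\<^bsub>W G\<^esub> wg G g h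
        \<otimes>\<^bsub>W G\<^esub> act G (h \<otimes> g) (wg G g' h') \<otimes>\<^bsub>W G\<^esub> act G h (wg G g h')"
  proof -
    have "wg G (g \<otimes> g') (h \<otimes> h') = wg G (g \<otimes> g') h \<otimes>\<^bsub>W G\<^esub> act G h (wg G (g \<otimes> g') h')"
      using g h g' h' by (intro wg_right') auto
    also have "wg G (g \<otimes> g') h = act G g (wg G g' h) \<otimes>\<^bsub>W G\<^esub> wg G g h"
      using g h g' h' by (intro wg_left') auto
    also have "wg G (g \<otimes> g') h' = act G g (wg G g' h') \<otimes>\<^bsub>W G\<^esub> wg G g h'"
      using g h g' h' by (intro wg_left') auto
    finally show ?thesis using g h g' h' by (simp add: act_mult act_act WG.m_assoc)
  qed
  define XX where "XX = act G g (wg G g' h)"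
  define YY where "YY = act G h (wg G g h')"
  define PP where "PP = act G (g \<otimes> h) (wg G g' h') \<otimes>\<^bsub>W G\<^esub> wg G g h"
  define QQ where "QQ = wg G g h \<otimes>\<^bsub>W G\<^esub> act G (h \<otimes> g) (wg G g' h')"
  have XY: "XX \<in> carrier (W G)" "YY \<in> carrier (W G)" "PP \<in> carrier (W G)" "QQ \<in> carrier (W G)"
    using g h g' h' by (simp_all add: XX_def YY_def PP_def QQ_def)
  have e1: "XX \<otimes>\<^bsub>W G\<^esub> PP \<otimes>\<^bsub>W G\<^esub> YY = wg G (g \<otimes> g') (h \<otimes> h')"
    unfolding E1 using g h g' h' by (simp add: XX_def YY_def PP_def QQ_def WG.m_assoc)
  have e2: "XX \<otimes>\<^bsub>W G\<^esub> QQ \<otimes>\<^bsub>W G\<^esub> YY = wg G (g \<otimes> g') (h \<otimes> h')"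
    unfolding E2 using g h g' h' by (simp add: XX_def YY_def PP_def QQ_def WG.m_assoc)
  have "XX \<otimes>\<^bsub>W G\<^esub> PP \<otimes>\<^bsub>W G\<^esub> YY = XX \<otimes>\<^bsub>W G\<^esub> QQ \<otimes>\<^bsub>W G\<^esub> YY"
    using e1 e2 by simp
  hence "PP = QQ" using XY by (simp add: WG.lcancel_iff WG.rcancel_iff)
  hence "act G (g \<otimes> h) (wg G g' h') \<otimes>\<^bsub>W G\<^esub> wg G g h = wg G g h \<otimes>\<^bsub>W G\<^esub> act G (h \<otimes> g) (wg G g' h')"
    by (simp add: PP_def QQ_def)
  then show ?thesis using V V2 by simp
qed

lemma CM2_gen:
  assumes g: "g \<in> carrier G" and h: "h \<in> carrier G" and V: "V \<in> carrier (W G)"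
  shows "wg G g h \<otimes>\<^bsub>W G\<^esub> V \<otimes>\<^bsub>W G\<^esub> inv\<^bsub>W G\<^esub> (wg G g h) = act G (gcomm G g h) V"
proof -
  define w where "w = wg G g h"
  have w: "w \<in> carrier (W G)" using g h by (simp add: w_def)
  have h1: "(\<lambda>V. w \<otimes>\<^bsub>W G\<^esub> V \<otimes>\<^bsub>W G\<^esub> inv\<^bsub>W G\<^esub> w) \<in> hom (W G) (W G)"
    by (rule homI) (use w in \<open>simp_all add: WG.m_assoc\<close>)
  have h2: "act G (gcomm G g h) \<in> hom (W G) (W G)" using g h by (simp add: act_hom)
  show ?thesis unfolding w_def[symmetric]
  proof (rule W_hom_eq[OF h1 h2 W_group _ V])
    fix a b assume a: "a \<in> carrier G" and b: "b \<in> carrier G"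
    have "act G (gcomm G g h) (wg G a b) \<otimes>\<^bsub>W G\<^esub> w = w \<otimes>\<^bsub>W G\<^esub> wg G a b"
      using CM2_gen_gen[OF g h a b] by (simp add: w_def)
    then have "w \<otimes>\<^bsub>W G\<^esub> wg G a b \<otimes>\<^bsub>W G\<^esub> inv\<^bsub>W G\<^esub> w = act G (gcomm G g h) (wg G a b) \<otimes>\<^bsub>W G\<^esub> w \<otimes>\<^bsub>W G\<^esub> inv\<^bsub>W G\<^esub> w"
      by simp
    then show "w \<otimes>\<^bsub>W G\<^esub> wg G a b \<otimes>\<^bsub>W G\<^esub> inv\<^bsub>W G\<^esub> w = act G (gcomm G g h) (wg G a b)"
      using w a b g h by (simp add: WG.m_assoc)
  qed
qed

lemma CM2_gen_inv:
  assumes g: "g \<in> carrier G" and h: "h \<in> carrier G" and V: "V \<in> carrier (W G)"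
  shows "inv\<^bsub>W G\<^esub> (wg G g h) \<otimes>\<^bsub>W G\<^esub> V \<otimes>\<^bsub>W G\<^esub> wg G g h = act G (inv (gcomm G g h)) V"
proof -
  define V' where "V' = act G (inv (gcomm G g h)) V"
  have V': "V' \<in> carrier (W G)" using g h V by (simp add: V'_def)
  have eq: "wg G g h \<otimes>\<^bsub>W G\<^esub> V' \<otimes>\<^bsub>W G\<^esub> inv\<^bsub>W G\<^esub> (wg G g h) = V"
    using CM2_gen[OF g h V'] g h V by (simp add: V'_def act_act_inv)
  have "inv\<^bsub>W G\<^esub> (wg G g h) \<otimes>\<^bsub>W G\<^esub> V \<otimes>\<^bsub>W G\<^esub> wg G g h
     = inv\<^bsub>W G\<^esub> (wg G g h) \<otimes>\<^bsub>W G\<^esub> (wg G g h \<otimes>\<^bsub>W G\<^esub> V' \<otimes>\<^bsub>W G\<^esub> inv\<^bsub>W G\<^esub> (wg G g h)) \<otimes>\<^bsub>W G\<^esub> wg G g h"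
    using eq by simp
  also have "\<dots> = V'" using g h V' by (simp add: WG.m_assoc)
  finally show ?thesis by (simp add: V'_def)
qed

theorem CM2:
  assumes w: "w \<in> carrier (W G)" and V: "V \<in> carrier (W G)"
  shows "w \<otimes>\<^bsub>W G\<^esub> V \<otimes>\<^bsub>W G\<^esub> inv\<^bsub>W G\<^esub> w = act G (kappa G w) V"
  using w V
proof (induction arbitrary: V rule: W_induct)
  case one then show ?case by (simp add: kappa_one act_one)
next
  case (mul A g h)
  have "A \<otimes>\<^bsub>W G\<^esub> wg G g h \<otimes>\<^bsub>W G\<^esub> V \<otimes>\<^bsub>W G\<^esub> inv\<^bsub>W G\<^esub> (A \<otimes>\<^bsub>W G\<^esub> wg G g h)
      = A \<otimes>\<^bsub>W G\<^esub> (wg G g h \<otimes>\<^bsub>W G\<^esub> V \<otimes>\<^bsub>W G\<^esub> inv\<^bsub>W G\<^esub> (wg G g h)) \<otimes>\<^bsub>W G\<^esub> inv\<^bsub>W G\<^esub> A"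
    using mul by (simp add: WG.m_assoc WG.inv_mult_group)
  also have "\<dots> = act G (kappa G A) (act G (gcomm G g h) V)"
    using mul by (simp add: CM2_gen)
  also have "\<dots> = act G (kappa G (A \<otimes>\<^bsub>W G\<^esub> wg G g h)) V"
    using mul by (simp add: act_act kappa_mult kappa_wg)
  finally show ?case .
next
  case (mulinv A g h)
  have "A \<otimes>\<^bsub>W G\<^esub> inv\<^bsub>W G\<^esub> (wg G g h) \<otimes>\<^bsub>W G\<^esub> V \<otimes>\<^bsub>W G\<^esub> inv\<^bsub>W G\<^esub> (A \<otimes>\<^bsub>W G\<^esub> inv\<^bsub>W G\<^esub> (wg G g h))
      = A \<otimes>\<^bsub>W G\<^esub> (inv\<^bsub>W G\<^esub> (wg G g h) \<otimes>\<^bsub>W G\<^esub> V \<otimes>\<^bsub>W G\<^esub> wg G g h) \<otimes>\<^bsub>W G\<^esub> inv\<^bsub>W G\<^esub> A"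
    using mulinv by (simp add: WG.m_assoc WG.inv_mult_group)
  also have "\<dots> = act G (kappa G A) (act G (inv (gcomm G g h)) V)"
    using mulinv by (simp add: CM2_gen_inv)
  also have "\<dots> = act G (kappa G (A \<otimes>\<^bsub>W G\<^esub> inv\<^bsub>W G\<^esub> (wg G g h))) V"
    using mulinv by (simp add: act_act kappa_mult kappa_wg kappa_inv)
  finally show ?case .
qed

end


context group
begin

interpretation WG: group "W G" by (rule W_group)

lemma wg_inv_right: "a \<in> carrier G \<Longrightarrow> h \<in> carrier G \<Longrightarrow>
    wg G a (inv h) = act G (inv h) (inv\<^bsub>W G\<^esub> (wg G a h))"
proof -
  assume a: "a \<in> carrier G" and h: "h \<in> carrier G"
  have "\<one>\<^bsub>W G\<^esub> = wg G a (h \<otimes> inv h)" using a h by simp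
  also have "\<dots> = wg G a h \<otimes>\<^bsub>W G\<^esub> act G h (wg G a (inv h))"
    using a h by (intro wg_right') auto
  finally have "act G h (wg G a (inv h)) = inv\<^bsub>W G\<^esub> (wg G a h)"
    using a h by (metis WG.inv_equality WG.inv_inv WG.inv_closed act_closed inv_closed wg_in_W')
  hence "act G (inv h) (act G h (wg G a (inv h))) = act G (inv h) (inv\<^bsub>W G\<^esub> (wg G a h))" by simp
  then show ?thesis using a h by (simp add: act_inv_act)
qed

lemma I1_gen:
  assumes a: "a \<in> carrier G" and g: "g \<in> carrier G" and h: "h \<in> carrier G"
  shows "act G a (wg G g h) = wg G a (gcomm G g h) \<otimes>\<^bsub>W G\<^esub> wg G g h"
proof -
  define c where "c = gcomm G g h"
  have c: "c \<in> carrier G" using g h by (simp add: c_def)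
  have c_eq: "c = conjg G g h \<otimes> inv h" using g h by (simp add: c_def gcomm_def conjg_def m_assoc)
  have s1: "wg G a c = wg G a (conjg G g h) \<otimes>\<^bsub>W G\<^esub> act G (conjg G g h) (wg G a (inv h))"
    unfolding c_eq using a g h by (intro wg_right') auto
  have s2: "act G (conjg G g h) (wg G a (inv h)) = act G c (inv\<^bsub>W G\<^esub> (wg G a h))"
    using a g h by (simp add: wg_inv_right act_act c_eq)
  have s3: "act G c (inv\<^bsub>W G\<^esub> (wg G a h)) = wg G g h \<otimes>\<^bsub>W G\<^esub> inv\<^bsub>W G\<^esub> (wg G a h) \<otimes>\<^bsub>W G\<^esub> inv\<^bsub>W G\<^esub> (wg G g h)"
    using CM2_gen[OF g h, of "inv\<^bsub>W G\<^esub> (wg G a h)"] a h by (simp add: c_def)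
  define g'' where "g'' = inv g \<otimes> a \<otimes> g"
  have g'': "g'' \<in> carrier G" using a g by (simp add: g''_def)
  have s4: "wg G a (conjg G g h) \<otimes>\<^bsub>W G\<^esub> wg G g h = wg G (a \<otimes> g) h"
  proof -
    have "wg G (g \<otimes> g'') h = wg G (conjg G g g'') (conjg G g h) \<otimes>\<^bsub>W G\<^esub> wg G g h"
      using g g'' h by (rule wg_left)
    moreover have "g \<otimes> g'' = a \<otimes> g" using a g by (simp add: g''_def m_assoc)
    moreover have "conjg G g g'' = a" using a g by (simp add: g''_def conjg_def m_assoc)
    ultimately show ?thesis by simp
  qed
  have s5: "wg G (a \<otimes> g) h = act G a (wg G g h) \<otimes>\<^bsub>W G\<^esub> wg G a h"
    using a g h by (rule wg_left')
  have "wg G a c = wg G a (conjg G g h) \<otimes>\<^bsub>W G\<^esub> (wg G g h \<otimes>\<^bsub>W G\<^esub> inv\<^bsub>W G\<^esub> (wg G a h) \<otimes>\<^bsub>W G\<^esub> inv\<^bsub>W G\<^esub> (wg G g h))"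
    using s1 s2 s3 by simp
  also have "\<dots> = (wg G a (conjg G g h) \<otimes>\<^bsub>W G\<^esub> wg G g h) \<otimes>\<^bsub>W G\<^esub> inv\<^bsub>W G\<^esub> (wg G a h) \<otimes>\<^bsub>W G\<^esub> inv\<^bsub>W G\<^esub> (wg G g h)"
    using a g h by (simp add: WG.m_assoc)
  also have "\<dots> = act G a (wg G g h) \<otimes>\<^bsub>W G\<^esub> inv\<^bsub>W G\<^esub> (wg G g h)"
    using a g h by (simp add: s4 s5 WG.m_assoc)
  finally have "wg G a c = act G a (wg G g h) \<otimes>\<^bsub>W G\<^esub> inv\<^bsub>W G\<^esub> (wg G g h)" .
  then show ?thesis using a g h by (simp add: c_def[symmetric] WG.m_assoc)
qed

theorem I1:
  assumes a: "a \<in> carrier G" and w: "w \<in> carrier (W G)"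
  shows "act G a w = wg G a (kappa G w) \<otimes>\<^bsub>W G\<^esub> w"
  using w
proof (induction rule: W_induct)
  case one then show ?case using a by (simp add: act_W_one kappa_one)
next
  case (mul A g h)
  define c where "c = gcomm G g h"
  have c: "c \<in> carrier G" using mul by (simp add: c_def)
  have "act G a (A \<otimes>\<^bsub>W G\<^esub> wg G g h) = wg G a (kappa G A) \<otimes>\<^bsub>W G\<^esub> A \<otimes>\<^bsub>W G\<^esub> (wg G a c \<otimes>\<^bsub>W G\<^esub> wg G g h)"
    using mul a by (simp add: act_mult I1_gen c_def)
  also have "\<dots> = wg G a (kappa G A) \<otimes>\<^bsub>W G\<^esub> (A \<otimes>\<^bsub>W G\<^esub> wg G a c \<otimes>\<^bsub>W G\<^esub> inv\<^bsub>W G\<^esub> A) \<otimes>\<^bsub>W G\<^esub> (A \<otimes>\<^bsub>W G\<^esub> wg G g h)"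
    using mul a c by (simp add: WG.m_assoc)
  also have "A \<otimes>\<^bsub>W G\<^esub> wg G a c \<otimes>\<^bsub>W G\<^esub> inv\<^bsub>W G\<^esub> A = act G (kappa G A) (wg G a c)"
    using mul a c by (simp add: CM2)
  also have "wg G a (kappa G A) \<otimes>\<^bsub>W G\<^esub> act G (kappa G A) (wg G a c) = wg G a (kappa G A \<otimes> c)"
    using mul a c by (simp add: wg_right')
  also have "kappa G A \<otimes> c = kappa G (A \<otimes>\<^bsub>W G\<^esub> wg G g h)"
    using mul by (simp add: kappa_mult kappa_wg c_def)
  finally show ?case .
next
  case (mulinv A g h)
  define c where "c = gcomm G g h"
  have c: "c \<in> carrier G" using mulinv by (simp add: c_def)
  have ic: "wg G a (inv c) = inv\<^bsub>W G\<^esub> (wg G g h) \<otimes>\<^bsub>W G\<^esub> inv\<^bsub>W G\<^esub> (wg G a c) \<otimes>\<^bsub>W G\<^esub> wg G g h"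
    using wg_inv_right[OF a c] CM2_gen_inv[of g h "inv\<^bsub>W G\<^esub> (wg G a c)"] mulinv a c
    by (simp add: c_def)
  have "act G a (A \<otimes>\<^bsub>W G\<^esub> inv\<^bsub>W G\<^esub> (wg G g h)) = wg G a (kappa G A) \<otimes>\<^bsub>W G\<^esub> A \<otimes>\<^bsub>W G\<^esub> inv\<^bsub>W G\<^esub> (wg G a c \<otimes>\<^bsub>W G\<^esub> wg G g h)"
    using mulinv a by (simp add: act_mult act_inv I1_gen c_def)
  also have "\<dots> = wg G a (kappa G A) \<otimes>\<^bsub>W G\<^esub> (A \<otimes>\<^bsub>W G\<^esub> wg G a (inv c) \<otimes>\<^bsub>W G\<^esub> inv\<^bsub>W G\<^esub> A) \<otimes>\<^bsub>W G\<^esub> (A \<otimes>\<^bsub>W G\<^esub> inv\<^bsub>W G\<^esub> (wg G g h))"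
    using mulinv a c by (simp add: ic WG.m_assoc WG.inv_mult_group)
  also have "A \<otimes>\<^bsub>W G\<^esub> wg G a (inv c) \<otimes>\<^bsub>W G\<^esub> inv\<^bsub>W G\<^esub> A = act G (kappa G A) (wg G a (inv c))"
    using mulinv a c by (simp add: CM2)
  also have "wg G a (kappa G A) \<otimes>\<^bsub>W G\<^esub> act G (kappa G A) (wg G a (inv c)) = wg G a (kappa G A \<otimes> inv c)"
    using mulinv a c by (simp add: wg_right')
  also have "kappa G A \<otimes> inv c = kappa G (A \<otimes>\<^bsub>W G\<^esub> inv\<^bsub>W G\<^esub> (wg G g h))"
    using mulinv by (simp add: kappa_mult kappa_inv kappa_wg c_def)
  finally show ?case .
qed

lemma kernel_central:
  assumes w: "w \<in> carrier (W G)" and k: "kappa G w = \<one>" and V: "V \<in> carrier (W G)"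
  shows "w \<otimes>\<^bsub>W G\<^esub> V = V \<otimes>\<^bsub>W G\<^esub> w"
proof -
  have "w \<otimes>\<^bsub>W G\<^esub> V \<otimes>\<^bsub>W G\<^esub> inv\<^bsub>W G\<^esub> w = V" using CM2[OF w V] k V by (simp add: act_one)
  hence "w \<otimes>\<^bsub>W G\<^esub> V \<otimes>\<^bsub>W G\<^esub> inv\<^bsub>W G\<^esub> w \<otimes>\<^bsub>W G\<^esub> w = V \<otimes>\<^bsub>W G\<^esub> w" by simp
  then show ?thesis using w V by (simp add: WG.m_assoc)
qed

lemma act_central:
  assumes z: "z \<in> group_center G" and A: "A \<in> carrier (W G)"
  shows "act G z A = A"
proof -
  have zc: "z \<in> carrier G" and zz: "\<And>x. x \<in> carrier G \<Longrightarrow> z \<otimes> x = x \<otimes> z"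
    using z by (auto simp add: group_center_def)
  have cz: "conjg G z x = x" if "x \<in> carrier G" for x
    using that zc zz[OF that] by (simp add: conjg_def m_assoc[symmetric]) (simp add: m_assoc)
  have h1: "act G z \<in> hom (W G) (W G)" using zc by (rule act_hom)
  have h2: "(\<lambda>A. A) \<in> hom (W G) (W G)" by (rule homI) auto
  show ?thesis
    by (rule W_hom_eq[OF h1 h2 W_group _ A]) (simp add: act_wg zc cz)
qed

lemma comm_W:
  assumes w: "w \<in> carrier (W G)" and V: "V \<in> carrier (W G)"
  shows "w \<otimes>\<^bsub>W G\<^esub> V \<otimes>\<^bsub>W G\<^esub> inv\<^bsub>W G\<^esub> w \<otimes>\<^bsub>W G\<^esub> inv\<^bsub>W G\<^esub> V = wg G (kappa G w) (kappa G V)"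
  using CM2[OF w V] I1[OF kappa_closed V] w V by (simp add: WG.m_assoc)

end


context group
begin

interpretation WG: group "W G" by (rule W_group)

abbreviation DG where "DG \<equiv> derived G (carrier G)"

lemma DG_subgroup: "subgroup DG G"
  by (rule derived_is_subgroup) simp

lemma DG_normal: "DG \<lhd> G"
  by (rule derived_is_normal[OF normal_self])

lemma DG_carrier: "u \<in> DG \<Longrightarrow> u \<in> carrier G"
  using subgroup.mem_carrier[OF DG_subgroup] by blast

lemma DG_mult: "u \<in> DG \<Longrightarrow> v \<in> DG \<Longrightarrow> u \<otimes> v \<in> DG"
  using subgroup.m_closed[OF DG_subgroup] by blast

lemma DG_inv: "u \<in> DG \<Longrightarrow> inv u \<in> DG"
  using subgroup.m_inv_closed[OF DG_subgroup] by blast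

lemma DG_one: "\<one> \<in> DG"
  using subgroup.one_closed[OF DG_subgroup] by blast

lemma DG_conjg: "g \<in> carrier G \<Longrightarrow> u \<in> DG \<Longrightarrow> conjg G g u \<in> DG"
  using DG_normal unfolding conjg_def by (metis normal_inv_iff)

lemma gcomm_DG: "a \<in> carrier G \<Longrightarrow> b \<in> carrier G \<Longrightarrow> gcomm G a b \<in> DG"
  unfolding derived_def gcomm_def by (rule generate.incl) blast

lemma kappa_DG: "w \<in> carrier (W G) \<Longrightarrow> kappa G w \<in> DG"
proof (induction rule: W_induct)
  case one then show ?case by (simp add: kappa_one DG_one)
next
  case (mul A g h) then show ?case by (simp add: kappa_mult kappa_wg DG_mult gcomm_DG)
next
  case (mulinv A g h) then show ?case by (simp add: kappa_mult kappa_inv kappa_wg DG_mult DG_inv gcomm_DG)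
qed

lemma center_carrier: "z \<in> group_center G \<Longrightarrow> z \<in> carrier G"
  by (simp add: group_center_def)

lemma center_comm: "z \<in> group_center G \<Longrightarrow> x \<in> carrier G \<Longrightarrow> z \<otimes> x = x \<otimes> z"
  by (simp add: group_center_def)

lemma gcomm_center: "z \<in> group_center G \<Longrightarrow> x \<in> carrier G \<Longrightarrow> gcomm G z x = \<one>"
proof -
  assume z: "z \<in> group_center G" and x: "x \<in> carrier G"
  have zc: "z \<in> carrier G" using z by (rule center_carrier)
  have "gcomm G z x = (z \<otimes> x) \<otimes> inv z \<otimes> inv x" by (simp add: gcomm_def)
  also have "z \<otimes> x = x \<otimes> z" using z x by (rule center_comm)
  finally show ?thesis using x zc by (simp add: m_assoc)
qed

lemma gcomm_center': "z \<in> group_center G \<Longrightarrow> x \<in> carrier G \<Longrightarrow> gcomm G x z = \<one>"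
proof -
  assume z: "z \<in> group_center G" and x: "x \<in> carrier G"
  have zc: "z \<in> carrier G" using z by (rule center_carrier)
  have "gcomm G x z = x \<otimes> (z \<otimes> inv x) \<otimes> inv z" using x zc by (simp add: gcomm_def m_assoc)
  also have "z \<otimes> inv x = inv x \<otimes> z" using center_comm[OF z inv_closed[OF x]] .
  finally show ?thesis using x zc by (simp add: m_assoc)
qed

lemma kernel_central': "w \<in> carrier (W G) \<Longrightarrow> kappa G w = \<one> \<Longrightarrow> V \<in> carrier (W G) \<Longrightarrow>
   V \<otimes>\<^bsub>W G\<^esub> w = w \<otimes>\<^bsub>W G\<^esub> V"
  using kernel_central by metis

lemma wg_center_central: "z \<in> group_center G \<Longrightarrow> h \<in> carrier G \<Longrightarrow> V \<in> carrier (W G) \<Longrightarrow>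
   wg G z h \<otimes>\<^bsub>W G\<^esub> V = V \<otimes>\<^bsub>W G\<^esub> wg G z h"
  by (rule kernel_central) (simp_all add: center_carrier kappa_wg gcomm_center)

lemma wg_center_central2: "z \<in> group_center G \<Longrightarrow> h \<in> carrier G \<Longrightarrow> V \<in> carrier (W G) \<Longrightarrow>
   wg G h z \<otimes>\<^bsub>W G\<^esub> V = V \<otimes>\<^bsub>W G\<^esub> wg G h z"
  by (rule kernel_central) (simp_all add: center_carrier kappa_wg gcomm_center')

lemma wg_center_right: "z \<in> group_center G \<Longrightarrow> h \<in> carrier G \<Longrightarrow> h' \<in> carrier G \<Longrightarrow>
   wg G z (h \<otimes> h') = wg G z h \<otimes>\<^bsub>W G\<^esub> wg G z h'"
proof -
  assume z: "z \<in> group_center G" and h: "h \<in> carrier G" and h': "h' \<in> carrier G"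
  have zc: "z \<in> carrier G" using z by (rule center_carrier)
  have "act G h (wg G z h') = wg G z h'"
    using I1[OF h, of "wg G z h'"] zc h h' by (simp add: kappa_wg gcomm_center[OF z h'])
  then show ?thesis using zc h h' by (simp add: wg_right')
qed

lemma wg_center_left: "z \<in> group_center G \<Longrightarrow> z' \<in> group_center G \<Longrightarrow> h \<in> carrier G \<Longrightarrow>
   wg G (z \<otimes> z') h = wg G z h \<otimes>\<^bsub>W G\<^esub> wg G z' h"
proof -
  assume z: "z \<in> group_center G" and z': "z' \<in> group_center G" and h: "h \<in> carrier G"
  have zc: "z \<in> carrier G" "z' \<in> carrier G" using z z' by (simp_all add: center_carrier)
  have "wg G (z \<otimes> z') h = act G z (wg G z' h) \<otimes>\<^bsub>W G\<^esub> wg G z h" using zc h by (simp add: wg_left')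
  also have "act G z (wg G z' h) = wg G z' h" using z zc h by (simp add: act_central)
  finally show ?thesis using wg_center_central[OF z' h, of "wg G z h"] zc h by simp
qed

lemma center_one: "\<one> \<in> group_center G"
  by (simp add: group_center_def)

lemma center_mult: "z \<in> group_center G \<Longrightarrow> z' \<in> group_center G \<Longrightarrow> z \<otimes> z' \<in> group_center G"
proof -
  assume z: "z \<in> group_center G" and z': "z' \<in> group_center G"
  have c: "z \<in> carrier G" "z' \<in> carrier G" using z z' by (simp_all add: center_carrier)
  have "z \<otimes> z' \<otimes> x = x \<otimes> (z \<otimes> z')" if x: "x \<in> carrier G" for x
  proof -
    have "z \<otimes> z' \<otimes> x = z \<otimes> (z' \<otimes> x)" using c x by (simp add: m_assoc)
    also have "z' \<otimes> x = x \<otimes> z'" using z' x by (rule center_comm)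
    also have "z \<otimes> (x \<otimes> z') = (z \<otimes> x) \<otimes> z'" using c x by (simp add: m_assoc)
    also have "z \<otimes> x = x \<otimes> z" using z x by (rule center_comm)
    finally show ?thesis using c x by (simp add: m_assoc)
  qed
  then show ?thesis using c by (simp add: group_center_def)
qed

lemma center_pow: "z \<in> group_center G \<Longrightarrow> z [^] (n::nat) \<in> group_center G"
  by (induction n) (simp_all add: center_one center_mult)

lemma center_inv: "z \<in> group_center G \<Longrightarrow> inv z \<in> group_center G"
proof -
  assume z: "z \<in> group_center G"
  have zc: "z \<in> carrier G" using z by (rule center_carrier)
  have "inv z \<otimes> x = x \<otimes> inv z" if x: "x \<in> carrier G" for x
  proof -
    have "z \<otimes> x = x \<otimes> z" using z x by (rule center_comm)
    hence "inv z \<otimes> (z \<otimes> x) \<otimes> inv z = inv z \<otimes> (x \<otimes> z) \<otimes> inv z" by simp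
    then show ?thesis using zc x by (simp add: m_assoc)
  qed
  then show ?thesis using zc by (simp add: group_center_def)
qed

lemma wg_center_pow_left: "z \<in> group_center G \<Longrightarrow> h \<in> carrier G \<Longrightarrow>
   wg G (z [^] (n::nat)) h = (wg G z h) [^]\<^bsub>W G\<^esub> n"
proof (induction n)
  case 0 then show ?case by simp
next
  case (Suc n)
  have "wg G (z [^] Suc n) h = wg G (z [^] n \<otimes> z) h" by simp
  also have "\<dots> = wg G (z [^] n) h \<otimes>\<^bsub>W G\<^esub> wg G z h"
    using Suc.prems by (intro wg_center_left center_pow)
  finally show ?case using Suc by simp
qed

lemma wg_center_pow_right: "z \<in> group_center G \<Longrightarrow> h \<in> carrier G \<Longrightarrow>
   wg G z (h [^] (n::nat)) = (wg G z h) [^]\<^bsub>W G\<^esub> n"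
proof (induction n)
  case 0 then show ?case using center_carrier by simp
next
  case (Suc n)
  have "wg G z (h [^] Suc n) = wg G z (h [^] n \<otimes> h)" by simp
  also have "\<dots> = wg G z (h [^] n) \<otimes>\<^bsub>W G\<^esub> wg G z h"
    using Suc.prems by (intro wg_center_right) auto
  finally show ?case using Suc by simp
qed

lemma wg_center_DG:
  assumes z: "z \<in> group_center G" and u: "u \<in> DG"
  shows "wg G z u = \<one>\<^bsub>W G\<^esub>"
proof -
  have zc: "z \<in> carrier G" using z by (rule center_carrier)
  define K where "K = {h \<in> carrier G. wg G z h = \<one>\<^bsub>W G\<^esub>}"
  have inv1: "wg G z (inv h) = inv\<^bsub>W G\<^esub> (wg G z h)" if h: "h \<in> carrier G" for h
  proof -
    have "\<one>\<^bsub>W G\<^esub> = wg G z (h \<otimes> inv h)" using h zc by simp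
    also have "\<dots> = wg G z h \<otimes>\<^bsub>W G\<^esub> wg G z (inv h)" by (rule wg_center_right) (use z h in auto)
    finally have "wg G z (inv h) = inv\<^bsub>W G\<^esub> (wg G z h) \<otimes>\<^bsub>W G\<^esub> \<one>\<^bsub>W G\<^esub>"
      using h zc by (subst WG.inv_solve_left) auto
    then show ?thesis using h zc by simp
  qed
  have sg: "subgroup K G"
  proof (rule subgroupI)
    show "K \<subseteq> carrier G" by (auto simp add: K_def)
    have "\<one> \<in> K" using zc by (simp add: K_def)
    then show "K \<noteq> {}" by blast
    show "inv h \<in> K" if "h \<in> K" for h using that by (simp add: K_def inv1)
    show "h \<otimes> k \<in> K" if "h \<in> K" "k \<in> K" for h k using that z by (simp add: K_def wg_center_right)
  qed
  have "derived_set G (carrier G) \<subseteq> K"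
  proof
    fix x assume "x \<in> derived_set G (carrier G)"
    then obtain a b where ab: "a \<in> carrier G" "b \<in> carrier G" "x = a \<otimes> b \<otimes> inv a \<otimes> inv b" by blast
    have "wg G z x = wg G z (a \<otimes> b \<otimes> inv a) \<otimes>\<^bsub>W G\<^esub> wg G z (inv b)"
      unfolding ab(3) by (rule wg_center_right) (use z ab in auto)
    also have "wg G z (a \<otimes> b \<otimes> inv a) = wg G z (a \<otimes> b) \<otimes>\<^bsub>W G\<^esub> wg G z (inv a)"
      by (rule wg_center_right) (use z ab in auto)
    also have "wg G z (a \<otimes> b) = wg G z a \<otimes>\<^bsub>W G\<^esub> wg G z b"
      by (rule wg_center_right) (use z ab in auto)
    also have "wg G z (inv a) = inv\<^bsub>W G\<^esub> (wg G z a)" using ab(1) by (rule inv1)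
    also have "wg G z (inv b) = inv\<^bsub>W G\<^esub> (wg G z b)" using ab(2) by (rule inv1)
    also have "wg G z a \<otimes>\<^bsub>W G\<^esub> wg G z b = wg G z b \<otimes>\<^bsub>W G\<^esub> wg G z a"
      using wg_center_central[OF z ab(1), of "wg G z b"] ab zc by simp
    also have "wg G z b \<otimes>\<^bsub>W G\<^esub> wg G z a \<otimes>\<^bsub>W G\<^esub> inv\<^bsub>W G\<^esub> (wg G z a) \<otimes>\<^bsub>W G\<^esub> inv\<^bsub>W G\<^esub> (wg G z b) = \<one>\<^bsub>W G\<^esub>"
      using ab zc by (simp add: WG.m_assoc)
    finally have "wg G z x = \<one>\<^bsub>W G\<^esub>" .
    moreover have "x \<in> carrier G" using ab by simp
    ultimately show "x \<in> K" by (simp add: K_def)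
  qed
 then have "DG \<subseteq> K" unfolding derived_def by (rule generate_subgroup_incl[OF _ sg])
  then show ?thesis using u by (auto simp add: K_def)
qed

lemma wg_DG_center: "z \<in> group_center G \<Longrightarrow> u \<in> DG \<Longrightarrow> wg G u z = \<one>\<^bsub>W G\<^esub>"
proof -
  assume z: "z \<in> group_center G" and u: "u \<in> DG"
  have "wg G u z = inv\<^bsub>W G\<^esub> (wg G z u)"
    using center_carrier[OF z] DG_carrier[OF u] by (rule wg_swap)
  then show ?thesis using wg_center_DG[OF z u] by simp
qed

end


primrec rprod :: "('a, 'b) monoid_scheme \<Rightarrow> (nat \<Rightarrow> 'a) \<Rightarrow> nat \<Rightarrow> 'a" where
  "rprod M f 0 = \<one>\<^bsub>M\<^esub>"
| "rprod M f (Suc n) = rprod M f n \<otimes>\<^bsub>M\<^esub> f n"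

primrec lprod :: "('a, 'b) monoid_scheme \<Rightarrow> (nat \<Rightarrow> 'a) \<Rightarrow> nat \<Rightarrow> 'a" where
  "lprod M f 0 = \<one>\<^bsub>M\<^esub>"
| "lprod M f (Suc n) = f n \<otimes>\<^bsub>M\<^esub> lprod M f n"

context group
begin

lemma rprod_closed [simp]: "(\<And>i. i < n \<Longrightarrow> f i \<in> carrier G) \<Longrightarrow> rprod G f n \<in> carrier G"
  by (induction n) auto

lemma lprod_closed [simp]: "(\<And>i. i < n \<Longrightarrow> f i \<in> carrier G) \<Longrightarrow> lprod G f n \<in> carrier G"
  by (induction n) auto

lemma rprod_cong: "(\<And>i. i < n \<Longrightarrow> f i = g i) \<Longrightarrow> rprod G f n = rprod G g n"
  by (induction n) auto

lemma lprod_cong: "(\<And>i. i < n \<Longrightarrow> f i = g i) \<Longrightarrow> lprod G f n = lprod G g n"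
  by (induction n) auto

lemma rprod_shift: "(\<And>i. i \<le> n \<Longrightarrow> f i \<in> carrier G) \<Longrightarrow>
    rprod G f (Suc n) = f 0 \<otimes> rprod G (\<lambda>i. f (Suc i)) n"
  by (induction n) (auto simp add: m_assoc)

lemma lprod_shift: "(\<And>i. i \<le> n \<Longrightarrow> f i \<in> carrier G) \<Longrightarrow>
    lprod G f (Suc n) = lprod G (\<lambda>i. f (Suc i)) n \<otimes> f 0"
  by (induction n) (auto simp add: m_assoc)

lemma rprod_hom:
  assumes h: "h \<in> hom G H" and H: "group H" and f: "\<And>i. i < n \<Longrightarrow> f i \<in> carrier G"
  shows "h (rprod G f n) = rprod H (\<lambda>i. h (f i)) n"
  using f
proof (induction n)
  case 0 then show ?case using h H by (simp add: hom_one[OF h is_group])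
next
  case (Suc n) then show ?case using h by (simp add: hom_mult)
qed

lemma lprod_hom:
  assumes h: "h \<in> hom G H" and H: "group H" and f: "\<And>i. i < n \<Longrightarrow> f i \<in> carrier G"
  shows "h (lprod G f n) = lprod H (\<lambda>i. h (f i)) n"
  using f
proof (induction n)
  case 0 then show ?case using h H by (simp add: hom_one[OF h is_group])
next
  case (Suc n) then show ?case using h by (simp add: hom_mult)
qed

lemma rprod_commute:
  assumes f: "\<And>i. i < n \<Longrightarrow> f i \<in> carrier G" and x: "x \<in> carrier G"
    and c: "\<And>i. i < n \<Longrightarrow> f i \<otimes> x = x \<otimes> f i"
  shows "rprod G f n \<otimes> x = x \<otimes> rprod G f n"
  using f c
proof (induction n)
  case 0 then show ?case using x by simp
next
  case (Suc n)
  have "rprod G f (Suc n) \<otimes> x = rprod G f n \<otimes> (f n \<otimes> x)" using Suc.prems x by (simp add: m_assoc)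
  also have "f n \<otimes> x = x \<otimes> f n" using Suc.prems by simp
  also have "rprod G f n \<otimes> (x \<otimes> f n) = (rprod G f n \<otimes> x) \<otimes> f n" using Suc.prems x by (simp add: m_assoc)
  also have "rprod G f n \<otimes> x = x \<otimes> rprod G f n" using Suc by simp
  finally show ?case using Suc.prems x by (simp add: m_assoc)
qed

lemma lprod_eq_rprod:
  assumes f: "\<And>i. i < n \<Longrightarrow> f i \<in> carrier G"
    and c: "\<And>i j. i < n \<Longrightarrow> j < n \<Longrightarrow> f i \<otimes> f j = f j \<otimes> f i"
  shows "lprod G f n = rprod G f n"
  using f c
proof (induction n)
  case 0 then show ?case by simp
next
  case (Suc n)
  have "lprod G f (Suc n) = f n \<otimes> rprod G f n" using Suc by simp
  also have "\<dots> = rprod G f n \<otimes> f n"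
    using rprod_commute[of n f "f n"] Suc.prems by simp
  finally show ?case by simp
qed

definition central_in :: "'a \<Rightarrow> bool" where
  "central_in z \<longleftrightarrow> z \<in> carrier G \<and> (\<forall>x\<in>carrier G. z \<otimes> x = x \<otimes> z)"

lemma central_in_one: "central_in \<one>"
  by (simp add: central_in_def)

lemma central_in_mult: "central_in a \<Longrightarrow> central_in b \<Longrightarrow> central_in (a \<otimes> b)"
proof -
  assume a: "central_in a" and b: "central_in b"
  have c: "a \<in> carrier G" "b \<in> carrier G" using a b by (simp_all add: central_in_def)
  have "a \<otimes> b \<otimes> x = x \<otimes> (a \<otimes> b)" if x: "x \<in> carrier G" for x
  proof -
    have "a \<otimes> b \<otimes> x = a \<otimes> (b \<otimes> x)" using c x by (simp add: m_assoc)
    also have "b \<otimes> x = x \<otimes> b" using b x by (simp add: central_in_def)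
    also have "a \<otimes> (x \<otimes> b) = (a \<otimes> x) \<otimes> b" using c x by (simp add: m_assoc)
    also have "a \<otimes> x = x \<otimes> a" using a x by (simp add: central_in_def)
    finally show ?thesis using c x by (simp add: m_assoc)
  qed
  then show ?thesis using c by (simp add: central_in_def)
qed

lemma central_in_inv: "central_in a \<Longrightarrow> central_in (inv a)"
proof -
  assume a: "central_in a"
  have c: "a \<in> carrier G" using a by (simp add: central_in_def)
  have "inv a \<otimes> x = x \<otimes> inv a" if x: "x \<in> carrier G" for x
  proof -
    have "a \<otimes> x = x \<otimes> a" using a x by (simp add: central_in_def)
    hence "inv a \<otimes> (a \<otimes> x) \<otimes> inv a = inv a \<otimes> (x \<otimes> a) \<otimes> inv a" by simp
    then show ?thesis using c x by (simp add: m_assoc)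
  qed
  then show ?thesis using c by (simp add: central_in_def)
qed

lemma central_in_pow: "central_in a \<Longrightarrow> central_in (a [^] (n::nat))"
  by (induction n) (simp_all add: central_in_one central_in_mult)

lemma central_in_rprod: "(\<And>i. i < n \<Longrightarrow> central_in (f i)) \<Longrightarrow> central_in (rprod G f n)"
  by (induction n) (simp_all add: central_in_one central_in_mult)

lemma central_carrier: "central_in a \<Longrightarrow> a \<in> carrier G"
  by (simp add: central_in_def)

lemma central_comm: "central_in a \<Longrightarrow> x \<in> carrier G \<Longrightarrow> a \<otimes> x = x \<otimes> a"
  by (simp add: central_in_def)

lemma central_pow_mult: "central_in a \<Longrightarrow> b \<in> carrier G \<Longrightarrow> (a \<otimes> b) [^] (n::nat) = a [^] n \<otimes> b [^] n"
proof -
  assume a: "central_in a" and b: "b \<in> carrier G"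
  have "a \<otimes> b = b \<otimes> a" using a b by (rule central_comm)
  then show ?thesis using a b by (intro pow_mult_distrib) (simp_all add: central_carrier)
qed

lemma rprod_pow_central:
  assumes "\<And>i. i < n \<Longrightarrow> central_in (f i)"
  shows "(rprod G f n) [^] (k::nat) = rprod G (\<lambda>i. f i [^] k) n"
  using assms
proof (induction n)
  case 0 then show ?case by simp
next
  case (Suc n)
  have c: "central_in (rprod G f n)" "central_in (f n)" using Suc.prems by (simp_all add: central_in_rprod)
  have "rprod G f (Suc n) [^] k = (f n \<otimes> rprod G f n) [^] k"
    using central_comm[OF c(2) central_carrier[OF c(1)]] by simp
  also have "\<dots> = f n [^] k \<otimes> rprod G f n [^] k"
    using c by (simp add: central_pow_mult central_carrier)
  also have "\<dots> = rprod G f n [^] k \<otimes> f n [^] k"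
    using central_comm[OF central_in_pow[OF c(2)] nat_pow_closed[OF central_carrier[OF c(1)]]] by simp
  finally show ?case using Suc by simp
qed

lemma rprod_telescope:
  assumes "\<And>i. i \<le> n \<Longrightarrow> central_in (f i)"
  shows "rprod G (\<lambda>i. inv (f (Suc i))) n \<otimes> rprod G f n = inv (f n) \<otimes> f 0"
  using assms
proof (induction n)
  case 0 then show ?case by (simp add: central_carrier)
next
  case (Suc n)
  have cc: "\<And>i. i \<le> Suc n \<Longrightarrow> central_in (f i)" using Suc.prems by auto
  have c: "\<And>i. i \<le> Suc n \<Longrightarrow> f i \<in> carrier G" using cc by (simp add: central_carrier)
  define R where "R = rprod G (\<lambda>i. inv (f (Suc i))) n"
  define S where "S = rprod G f n"
  have RS: "R \<in> carrier G" "S \<in> carrier G" using c by (simp_all add: R_def S_def)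
  have IH: "R \<otimes> S = inv (f n) \<otimes> f 0" using Suc cc by (simp add: R_def S_def)
  have fc: "f 0 \<in> carrier G" "f n \<in> carrier G" "f (Suc n) \<in> carrier G" using c by auto
  have "rprod G (\<lambda>i. inv (f (Suc i))) (Suc n) \<otimes> rprod G f (Suc n) = R \<otimes> (inv (f (Suc n)) \<otimes> S) \<otimes> f n"
    using RS fc by (simp add: R_def[symmetric] S_def[symmetric] m_assoc)
  also have "inv (f (Suc n)) \<otimes> S = S \<otimes> inv (f (Suc n))"
    using central_comm[OF central_in_inv[OF cc[of "Suc n"]] RS(2)] by simp
  also have "R \<otimes> (S \<otimes> inv (f (Suc n))) \<otimes> f n = (R \<otimes> S) \<otimes> (inv (f (Suc n)) \<otimes> f n)"
    using RS fc by (simp add: m_assoc)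
  also have "\<dots> = inv (f n) \<otimes> f 0 \<otimes> (inv (f (Suc n)) \<otimes> f n)" using IH by simp
  also have "inv (f n) \<otimes> f 0 = f 0 \<otimes> inv (f n)"
    using central_comm[OF central_in_inv[OF cc[of n]] fc(1)] by simp
  also have "f 0 \<otimes> inv (f n) \<otimes> (inv (f (Suc n)) \<otimes> f n) = f 0 \<otimes> ((inv (f n) \<otimes> inv (f (Suc n))) \<otimes> f n)"
    using fc by (simp add: m_assoc)
  also have "inv (f n) \<otimes> inv (f (Suc n)) = inv (f (Suc n)) \<otimes> inv (f n)"
    using central_comm[OF central_in_inv[OF cc[of n]] inv_closed[OF fc(3)]] by simp
  also have "f 0 \<otimes> ((inv (f (Suc n)) \<otimes> inv (f n)) \<otimes> f n) = f 0 \<otimes> inv (f (Suc n))" using fc by (simp add: m_assoc)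
  also have "\<dots> = inv (f (Suc n)) \<otimes> f 0"
    using central_comm[OF central_in_inv[OF cc[of "Suc n"]] fc(1)] by simp
  finally show ?case .
qed

end


locale mpc = group +
  fixes p :: nat
  assumes mb: "metabelian G"
    and pc: "p_central G p"

context mpc
begin

interpretation WG: group "W G" by (rule W_group)

lemma DG_comm: "u \<in> DG \<Longrightarrow> v \<in> DG \<Longrightarrow> u \<otimes> v = v \<otimes> u"
  using mb by (simp add: metabelian_def)

lemma gcomm_DG2: "u \<in> DG \<Longrightarrow> v \<in> DG \<Longrightarrow> gcomm G u v = \<one>"
proof -
  assume u: "u \<in> DG" and v: "v \<in> DG"
  have c: "u \<in> carrier G" "v \<in> carrier G" using u v by (simp_all add: DG_carrier)
  have "gcomm G u v = (u \<otimes> v) \<otimes> inv u \<otimes> inv v" by (simp add: gcomm_def)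
  also have "u \<otimes> v = v \<otimes> u" using u v by (rule DG_comm)
  finally show ?thesis using c by (simp add: m_assoc)
qed

lemma wg_DG_central: "u \<in> DG \<Longrightarrow> v \<in> DG \<Longrightarrow> WG.central_in (wg G u v)"
  unfolding WG.central_in_def
  using kernel_central[of "wg G u v"] by (simp add: DG_carrier kappa_wg gcomm_DG2)

lemma wg_DG_left: "u1 \<in> DG \<Longrightarrow> u2 \<in> DG \<Longrightarrow> v \<in> DG \<Longrightarrow>
    wg G (u1 \<otimes> u2) v = wg G u1 v \<otimes>\<^bsub>W G\<^esub> wg G u2 v"
proof -
  assume u1: "u1 \<in> DG" and u2: "u2 \<in> DG" and v: "v \<in> DG"
  have c: "u1 \<in> carrier G" "u2 \<in> carrier G" "v \<in> carrier G" using u1 u2 v by (simp_all add: DG_carrier)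
  have "wg G (u1 \<otimes> u2) v = act G u1 (wg G u2 v) \<otimes>\<^bsub>W G\<^esub> wg G u1 v" using c by (simp add: wg_left')
  also have "act G u1 (wg G u2 v) = wg G u2 v"
    using I1[OF c(1), of "wg G u2 v"] c u2 v by (simp add: kappa_wg gcomm_DG2)
  finally show ?thesis
    using WG.central_comm[OF wg_DG_central[OF u2 v], of "wg G u1 v"] c by simp
qed

lemma wg_DG_right: "u \<in> DG \<Longrightarrow> v1 \<in> DG \<Longrightarrow> v2 \<in> DG \<Longrightarrow>
    wg G u (v1 \<otimes> v2) = wg G u v1 \<otimes>\<^bsub>W G\<^esub> wg G u v2"
proof -
  assume u: "u \<in> DG" and v1: "v1 \<in> DG" and v2: "v2 \<in> DG"
  have c: "u \<in> carrier G" "v1 \<in> carrier G" "v2 \<in> carrier G" using u v1 v2 by (simp_all add: DG_carrier)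
  have "wg G u (v1 \<otimes> v2) = wg G u v1 \<otimes>\<^bsub>W G\<^esub> act G v1 (wg G u v2)" using c by (simp add: wg_right')
  also have "act G v1 (wg G u v2) = wg G u v2"
    using I1[OF c(2), of "wg G u v2"] c u v2 by (simp add: kappa_wg gcomm_DG2)
  finally show ?thesis .
qed

lemma wg_DG_inv_left: "u \<in> DG \<Longrightarrow> v \<in> DG \<Longrightarrow> wg G (inv u) v = inv\<^bsub>W G\<^esub> (wg G u v)"
proof -
  assume u: "u \<in> DG" and v: "v \<in> DG"
  have c: "u \<in> carrier G" "v \<in> carrier G" using u v by (simp_all add: DG_carrier)
  have "wg G (inv u) v \<otimes>\<^bsub>W G\<^esub> wg G u v = wg G (inv u \<otimes> u) v"
    using wg_DG_left[OF DG_inv[OF u] u v] by simp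
  also have "\<dots> = \<one>\<^bsub>W G\<^esub>" using c by simp
  finally show ?thesis using c by (simp add: WG.inv_equality)
qed

lemma DG_pow: "u \<in> DG \<Longrightarrow> u [^] (n::nat) \<in> DG"
  by (induction n) (simp_all add: DG_one DG_mult)

lemma wg_DG_pow_left: "u \<in> DG \<Longrightarrow> v \<in> DG \<Longrightarrow> wg G (u [^] (n::nat)) v = (wg G u v) [^]\<^bsub>W G\<^esub> n"
proof (induction n)
  case 0 then show ?case by (simp add: DG_carrier)
next
  case (Suc n)
  have un: "u [^] n \<in> DG" using Suc.prems by (simp add: DG_pow)
  have "wg G (u [^] Suc n) v = wg G (u [^] n \<otimes> u) v" by simp
  also have "\<dots> = wg G (u [^] n) v \<otimes>\<^bsub>W G\<^esub> wg G u v" using un Suc.prems by (rule wg_DG_left)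
  finally show ?case using Suc by simp
qed

lemma pc_center: "x \<in> carrier G \<Longrightarrow> x [^] p \<in> group_center G"
  using pc by (simp add: p_central_def)

lemma wg_DG_pow_p: "u \<in> DG \<Longrightarrow> v \<in> DG \<Longrightarrow> (wg G u v) [^]\<^bsub>W G\<^esub> p = \<one>\<^bsub>W G\<^esub>"
  using wg_DG_pow_left[of u v p] wg_center_DG[OF pc_center[OF DG_carrier] ] by simp

lemma W_commutator:
  assumes w: "w \<in> carrier (W G)" and V: "V \<in> carrier (W G)"
  shows "WG.central_in (w \<otimes>\<^bsub>W G\<^esub> V \<otimes>\<^bsub>W G\<^esub> inv\<^bsub>W G\<^esub> w \<otimes>\<^bsub>W G\<^esub> inv\<^bsub>W G\<^esub> V)"
    and "(w \<otimes>\<^bsub>W G\<^esub> V \<otimes>\<^bsub>W G\<^esub> inv\<^bsub>W G\<^esub> w \<otimes>\<^bsub>W G\<^esub> inv\<^bsub>W G\<^esub> V) [^]\<^bsub>W G\<^esub> p = \<one>\<^bsub>W G\<^esub>"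
  using comm_W[OF w V] wg_DG_central[OF kappa_DG[OF w] kappa_DG[OF V]]
    wg_DG_pow_p[OF kappa_DG[OF w] kappa_DG[OF V]] by simp_all

end


context mpc
begin

interpretation WG: group "W G" by (rule W_group)

lemma Qstep:
  assumes x: "x \<in> carrier G" and y: "y \<in> carrier G"
  shows "act G y (wg G x (y [^] i)) = inv\<^bsub>W G\<^esub> (wg G x y) \<otimes>\<^bsub>W G\<^esub> wg G x (y [^] Suc i)"
proof -
  have "wg G x (y [^] Suc i) = wg G x (y \<otimes> y [^] i)" using y by (simp only: nat_pow_Suc2)
  also have "\<dots> = wg G x y \<otimes>\<^bsub>W G\<^esub> act G y (wg G x (y [^] i))" using x y by (simp add: wg_right')
  finally have "wg G x (y [^] Suc i) = wg G x y \<otimes>\<^bsub>W G\<^esub> act G y (wg G x (y [^] i))" .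
  then show ?thesis using x y by (simp add: WG.inv_solve_left)
qed

lemma Piprime_identity:
  assumes x: "x \<in> carrier G" and y: "y \<in> carrier G"
  defines "m \<equiv> wg G x y" and "c \<equiv> gcomm G x y"
    and "Q \<equiv> \<lambda>i. wg G x (y [^] i)"
    and "P \<equiv> \<lambda>j. rprod (W G) (\<lambda>k. wg G x (y [^] Suc k)) j"
    and "s \<equiv> kappa G (rprod (W G) (\<lambda>i. wg G x (y [^] i)) p)"
  shows "m [^]\<^bsub>W G\<^esub> p \<otimes>\<^bsub>W G\<^esub> wg G y s
      = Q p \<otimes>\<^bsub>W G\<^esub> rprod (W G) (\<lambda>i. wg G c (kappa G (P i))) p"
proof -
  have m: "m \<in> carrier (W G)" using x y by (simp add: m_def)
  have c: "c \<in> DG" using x y by (simp add: c_def gcomm_DG)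
  have Q: "\<And>i. Q i \<in> carrier (W G)" using x y by (simp add: Q_def)
  have P: "\<And>j. P j \<in> carrier (W G)" using x y by (simp add: P_def)
  have km: "kappa G m = c" using x y by (simp add: m_def c_def kappa_wg)
  define Z where "Z = (\<lambda>j. rprod (W G) (\<lambda>i. wg G c (kappa G (P i))) j)"
  have Zc: "WG.central_in (Z j)" for j
    unfolding Z_def by (rule WG.central_in_rprod) (simp add: wg_DG_central c kappa_DG P)
  have Z: "Z j \<in> carrier (W G)" for j using Zc[of j] by (simp add: WG.central_carrier)
  have step: "rprod (W G) (\<lambda>i. inv\<^bsub>W G\<^esub> m \<otimes>\<^bsub>W G\<^esub> Q (Suc i)) j
      = (inv\<^bsub>W G\<^esub> m) [^]\<^bsub>W G\<^esub> j \<otimes>\<^bsub>W G\<^esub> P j \<otimes>\<^bsub>W G\<^esub> Z j" for j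
  proof (induction j)
    case 0 then show ?case by (simp add: P_def Z_def)
  next
    case (Suc j)
    define A where "A = (inv\<^bsub>W G\<^esub> m) [^]\<^bsub>W G\<^esub> j"
    have A: "A \<in> carrier (W G)" using m by (simp add: A_def)
    have wc: "WG.central_in (wg G c (kappa G (P j)))" by (simp add: wg_DG_central c kappa_DG P)
    have wcc: "wg G c (kappa G (P j)) \<in> carrier (W G)" using wc by (simp add: WG.central_carrier)
    have conj: "m \<otimes>\<^bsub>W G\<^esub> P j \<otimes>\<^bsub>W G\<^esub> inv\<^bsub>W G\<^esub> m = wg G c (kappa G (P j)) \<otimes>\<^bsub>W G\<^esub> P j"
      using CM2[OF m P[of j]] I1[of c "P j"] c km P by (simp add: DG_carrier)
    have "rprod (W G) (\<lambda>i. inv\<^bsub>W G\<^esub> m \<otimes>\<^bsub>W G\<^esub> Q (Suc i)) (Suc j)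
        = A \<otimes>\<^bsub>W G\<^esub> P j \<otimes>\<^bsub>W G\<^esub> Z j \<otimes>\<^bsub>W G\<^esub> (inv\<^bsub>W G\<^esub> m \<otimes>\<^bsub>W G\<^esub> Q (Suc j))"
      using Suc by (simp add: A_def)
    also have "\<dots> = A \<otimes>\<^bsub>W G\<^esub> P j \<otimes>\<^bsub>W G\<^esub> (inv\<^bsub>W G\<^esub> m \<otimes>\<^bsub>W G\<^esub> Q (Suc j)) \<otimes>\<^bsub>W G\<^esub> Z j"
      using WG.central_comm[OF Zc[of j], of "inv\<^bsub>W G\<^esub> m \<otimes>\<^bsub>W G\<^esub> Q (Suc j)"] A P m Q Z
      by (simp add: WG.m_assoc)
    also have "\<dots> = A \<otimes>\<^bsub>W G\<^esub> inv\<^bsub>W G\<^esub> m \<otimes>\<^bsub>W G\<^esub> (m \<otimes>\<^bsub>W G\<^esub> P j \<otimes>\<^bsub>W G\<^esub> inv\<^bsub>W G\<^esub> m) \<otimes>\<^bsub>W G\<^esub> Q (Suc j) \<otimes>\<^bsub>W G\<^esub> Z j"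
      using A P m Q Z by (simp add: WG.m_assoc)
    also have "\<dots> = A \<otimes>\<^bsub>W G\<^esub> inv\<^bsub>W G\<^esub> m \<otimes>\<^bsub>W G\<^esub> (wg G c (kappa G (P j)) \<otimes>\<^bsub>W G\<^esub> P j) \<otimes>\<^bsub>W G\<^esub> Q (Suc j) \<otimes>\<^bsub>W G\<^esub> Z j"
      by (simp add: conj)
    also have "\<dots> = A \<otimes>\<^bsub>W G\<^esub> inv\<^bsub>W G\<^esub> m \<otimes>\<^bsub>W G\<^esub> (P j \<otimes>\<^bsub>W G\<^esub> Q (Suc j)) \<otimes>\<^bsub>W G\<^esub> (Z j \<otimes>\<^bsub>W G\<^esub> wg G c (kappa G (P j)))"
    proof -
      have "wg G c (kappa G (P j)) \<otimes>\<^bsub>W G\<^esub> (P j \<otimes>\<^bsub>W G\<^esub> Q (Suc j) \<otimes>\<^bsub>W G\<^esub> Z j)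
          = (P j \<otimes>\<^bsub>W G\<^esub> Q (Suc j) \<otimes>\<^bsub>W G\<^esub> Z j) \<otimes>\<^bsub>W G\<^esub> wg G c (kappa G (P j))"
        using WG.central_comm[OF wc] P Q Z by simp
      then show ?thesis using A m P Q Z wcc by (simp add: WG.m_assoc)
    qed
    also have "\<dots> = (inv\<^bsub>W G\<^esub> m) [^]\<^bsub>W G\<^esub> Suc j \<otimes>\<^bsub>W G\<^esub> P (Suc j) \<otimes>\<^bsub>W G\<^esub> Z (Suc j)"
      by (simp add: A_def P_def Z_def Q_def)
    finally show ?case .
  qed
  define Pi where "Pi = rprod (W G) Q p"
  have Pi: "Pi \<in> carrier (W G)" using Q by (simp add: Pi_def)
  have actPi: "act G y Pi = rprod (W G) (\<lambda>i. inv\<^bsub>W G\<^esub> m \<otimes>\<^bsub>W G\<^esub> Q (Suc i)) p"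
  proof -
    have "act G y Pi = rprod (W G) (\<lambda>i. act G y (Q i)) p"
      unfolding Pi_def using WG.rprod_hom[OF act_hom[OF y] W_group, of p Q] Q by simp
    also have "\<dots> = rprod (W G) (\<lambda>i. inv\<^bsub>W G\<^esub> m \<otimes>\<^bsub>W G\<^esub> Q (Suc i)) p"
      by (rule WG.rprod_cong) (simp add: Q_def m_def Qstep x y)
    finally show ?thesis .
  qed
  have I1Pi: "act G y Pi = wg G y s \<otimes>\<^bsub>W G\<^esub> Pi"
    using I1[OF y Pi] by (simp add: s_def Pi_def Q_def)
  have PpPi: "P p = Pi \<otimes>\<^bsub>W G\<^esub> Q p"
  proof -
    have "rprod (W G) Q (Suc p) = Q 0 \<otimes>\<^bsub>W G\<^esub> P p"
      unfolding P_def Q_def by (rule WG.rprod_shift) (simp add: x y)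
    moreover have "Q 0 = \<one>\<^bsub>W G\<^esub>" using x by (simp add: Q_def)
    ultimately show ?thesis using P by (simp add: Pi_def)
  qed
  have vc: "WG.central_in (Q p)"
    unfolding WG.central_in_def using kernel_central[of "Q p"] x y Q
    by (simp add: Q_def kappa_wg gcomm_center' pc_center)
  have s: "s \<in> carrier G" by (simp add: s_def)
  have wys: "wg G y s \<in> carrier (W G)" using y s by simp
  have "wg G y s \<otimes>\<^bsub>W G\<^esub> Pi = (inv\<^bsub>W G\<^esub> m) [^]\<^bsub>W G\<^esub> p \<otimes>\<^bsub>W G\<^esub> (Pi \<otimes>\<^bsub>W G\<^esub> Q p) \<otimes>\<^bsub>W G\<^esub> Z p"
    using I1Pi actPi step[of p] PpPi by simp
  also have "\<dots> = (inv\<^bsub>W G\<^esub> m) [^]\<^bsub>W G\<^esub> p \<otimes>\<^bsub>W G\<^esub> Q p \<otimes>\<^bsub>W G\<^esub> Z p \<otimes>\<^bsub>W G\<^esub> Pi"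
  proof -
    have "Pi \<otimes>\<^bsub>W G\<^esub> (Q p \<otimes>\<^bsub>W G\<^esub> Z p) = (Q p \<otimes>\<^bsub>W G\<^esub> Z p) \<otimes>\<^bsub>W G\<^esub> Pi"
      using WG.central_comm[OF WG.central_in_mult[OF vc Zc[of p]] Pi] by simp
    then show ?thesis using m Pi Q Z by (simp add: WG.m_assoc)
  qed
  finally have "wg G y s = (inv\<^bsub>W G\<^esub> m) [^]\<^bsub>W G\<^esub> p \<otimes>\<^bsub>W G\<^esub> Q p \<otimes>\<^bsub>W G\<^esub> Z p"
    using m Pi Q Z wys by (simp add: WG.rcancel_iff)
  hence "m [^]\<^bsub>W G\<^esub> p \<otimes>\<^bsub>W G\<^esub> wg G y s = m [^]\<^bsub>W G\<^esub> p \<otimes>\<^bsub>W G\<^esub> inv\<^bsub>W G\<^esub> (m [^]\<^bsub>W G\<^esub> p) \<otimes>\<^bsub>W G\<^esub> (Q p \<otimes>\<^bsub>W G\<^esub> Z p)"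
    using m Q Z by (simp add: WG.nat_pow_inv WG.m_assoc)
  also have "\<dots> = Q p \<otimes>\<^bsub>W G\<^esub> Z p" using m Q Z by simp
  finally show ?thesis by (simp add: Z_def)
qed

end


context mpc
begin

interpretation WG: group "W G" by (rule W_group)

lemma kappa_lprod_rprod:
  assumes f: "\<And>i. i < n \<Longrightarrow> f i \<in> carrier (W G)"
  shows "kappa G (lprod (W G) f n) = kappa G (rprod (W G) f n)"
proof -
  have kf: "\<And>i. i < n \<Longrightarrow> kappa G (f i) \<in> DG" using f by (simp add: kappa_DG)
  have "kappa G (lprod (W G) f n) = lprod G (\<lambda>i. kappa G (f i)) n"
    using WG.lprod_hom[OF kappa_hom is_group f] by simp
  also have "\<dots> = rprod G (\<lambda>i. kappa G (f i)) n"
    by (rule lprod_eq_rprod) (simp_all add: kf DG_carrier DG_comm)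
  also have "\<dots> = kappa G (rprod (W G) f n)"
    using WG.rprod_hom[OF kappa_hom is_group f] by simp
  finally show ?thesis .
qed

lemma Pi_identity:
  assumes x: "x \<in> carrier G" and y: "y \<in> carrier G"
  defines "m \<equiv> wg G x y" and "c \<equiv> gcomm G x y"
    and "Q \<equiv> \<lambda>i. wg G x (y [^] i)"
    and "P \<equiv> \<lambda>j. rprod (W G) (\<lambda>k. wg G x (y [^] Suc k)) j"
    and "s \<equiv> kappa G (rprod (W G) (\<lambda>i. wg G x (y [^] i)) p)"
  assumes sc: "s \<in> group_center G"
  shows "m [^]\<^bsub>W G\<^esub> p \<otimes>\<^bsub>W G\<^esub> wg G y s
      = Q p \<otimes>\<^bsub>W G\<^esub> rprod (W G) (\<lambda>i. wg G (inv c) (kappa G (P (Suc i)))) p"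
proof -
  have m: "m \<in> carrier (W G)" using x y by (simp add: m_def)
  have c: "c \<in> DG" using x y by (simp add: c_def gcomm_DG)
  have ic: "inv c \<in> DG" using c by (rule DG_inv)
  have Q: "\<And>i. Q i \<in> carrier (W G)" using x y by (simp add: Q_def)
  have P: "\<And>j. P j \<in> carrier (W G)" using x y by (simp add: P_def)
  define L where "L = (\<lambda>j. lprod (W G) (\<lambda>k. wg G x (y [^] Suc k)) j)"
  have L: "\<And>j. L j \<in> carrier (W G)" using x y by (simp add: L_def)
  have kL: "kappa G (L j) = kappa G (P j)" for j
    unfolding L_def P_def by (rule kappa_lprod_rprod) (simp add: x y)
  have kim: "kappa G (inv\<^bsub>W G\<^esub> m) = inv c" using x y m by (simp add: kappa_inv m_def c_def kappa_wg)
  define Z where "Z = (\<lambda>j. rprod (W G) (\<lambda>i. wg G (inv c) (kappa G (P (Suc i)))) j)"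
  have Zc: "WG.central_in (Z j)" for j
    unfolding Z_def by (rule WG.central_in_rprod) (simp add: wg_DG_central ic kappa_DG P)
  have Z: "Z j \<in> carrier (W G)" for j using Zc[of j] by (simp add: WG.central_carrier)
  have step: "lprod (W G) (\<lambda>i. inv\<^bsub>W G\<^esub> m \<otimes>\<^bsub>W G\<^esub> Q (Suc i)) j
      = L j \<otimes>\<^bsub>W G\<^esub> (inv\<^bsub>W G\<^esub> m) [^]\<^bsub>W G\<^esub> j \<otimes>\<^bsub>W G\<^esub> Z j" for j
  proof (induction j)
    case 0 then show ?case by (simp add: L_def Z_def)
  next
    case (Suc j)
    define A where "A = (inv\<^bsub>W G\<^esub> m) [^]\<^bsub>W G\<^esub> j"
    have A: "A \<in> carrier (W G)" using m by (simp add: A_def)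
    have LS: "L (Suc j) = Q (Suc j) \<otimes>\<^bsub>W G\<^esub> L j" by (simp add: L_def Q_def)
    define B where "B = wg G (inv c) (kappa G (P (Suc j)))"
    have wc: "WG.central_in B" by (simp add: B_def wg_DG_central ic kappa_DG P)
    have B: "B \<in> carrier (W G)" using wc by (simp add: WG.central_carrier)
    have conj: "inv\<^bsub>W G\<^esub> m \<otimes>\<^bsub>W G\<^esub> L (Suc j) \<otimes>\<^bsub>W G\<^esub> m = B \<otimes>\<^bsub>W G\<^esub> L (Suc j)"
      using CM2[OF WG.inv_closed[OF m] L[of "Suc j"]] I1[of "inv c" "L (Suc j)"] ic kim m L
      by (simp add: DG_carrier kL B_def)
    have conj2: "inv\<^bsub>W G\<^esub> m \<otimes>\<^bsub>W G\<^esub> L (Suc j) = B \<otimes>\<^bsub>W G\<^esub> L (Suc j) \<otimes>\<^bsub>W G\<^esub> inv\<^bsub>W G\<^esub> m"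
    proof -
      have "inv\<^bsub>W G\<^esub> m \<otimes>\<^bsub>W G\<^esub> L (Suc j) = inv\<^bsub>W G\<^esub> m \<otimes>\<^bsub>W G\<^esub> L (Suc j) \<otimes>\<^bsub>W G\<^esub> m \<otimes>\<^bsub>W G\<^esub> inv\<^bsub>W G\<^esub> m"
        using m L by (simp add: WG.m_assoc)
      then show ?thesis using conj by simp
    qed
    have "lprod (W G) (\<lambda>i. inv\<^bsub>W G\<^esub> m \<otimes>\<^bsub>W G\<^esub> Q (Suc i)) (Suc j)
        = inv\<^bsub>W G\<^esub> m \<otimes>\<^bsub>W G\<^esub> Q (Suc j) \<otimes>\<^bsub>W G\<^esub> (L j \<otimes>\<^bsub>W G\<^esub> A \<otimes>\<^bsub>W G\<^esub> Z j)"
      using Suc by (simp add: A_def)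
    also have "\<dots> = (inv\<^bsub>W G\<^esub> m \<otimes>\<^bsub>W G\<^esub> L (Suc j)) \<otimes>\<^bsub>W G\<^esub> A \<otimes>\<^bsub>W G\<^esub> Z j"
      using m Q L A Z by (simp add: LS WG.m_assoc)
    also have "\<dots> = B \<otimes>\<^bsub>W G\<^esub> (L (Suc j) \<otimes>\<^bsub>W G\<^esub> (inv\<^bsub>W G\<^esub> m \<otimes>\<^bsub>W G\<^esub> A) \<otimes>\<^bsub>W G\<^esub> Z j)"
      using m L A Z B by (simp add: conj2 WG.m_assoc)
    also have "\<dots> = L (Suc j) \<otimes>\<^bsub>W G\<^esub> (inv\<^bsub>W G\<^esub> m \<otimes>\<^bsub>W G\<^esub> A) \<otimes>\<^bsub>W G\<^esub> Z j \<otimes>\<^bsub>W G\<^esub> B"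
      using WG.central_comm[OF wc] m L A Z by simp
    also have "inv\<^bsub>W G\<^esub> m \<otimes>\<^bsub>W G\<^esub> A = (inv\<^bsub>W G\<^esub> m) [^]\<^bsub>W G\<^esub> Suc j"
      by (simp only: A_def WG.nat_pow_Suc2[OF WG.inv_closed[OF m]])
    also have "L (Suc j) \<otimes>\<^bsub>W G\<^esub> (inv\<^bsub>W G\<^esub> m) [^]\<^bsub>W G\<^esub> Suc j \<otimes>\<^bsub>W G\<^esub> Z j \<otimes>\<^bsub>W G\<^esub> B
        = L (Suc j) \<otimes>\<^bsub>W G\<^esub> (inv\<^bsub>W G\<^esub> m) [^]\<^bsub>W G\<^esub> Suc j \<otimes>\<^bsub>W G\<^esub> Z (Suc j)"
      using m L Z B by (simp add: Z_def B_def WG.m_assoc)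
    finally show ?case .
  qed
  define Pi where "Pi = lprod (W G) Q p"
  have Pi: "Pi \<in> carrier (W G)" using Q by (simp add: Pi_def)
  have kPi: "kappa G Pi = s"
    unfolding Pi_def s_def Q_def by (rule kappa_lprod_rprod) (simp add: x y)
  have actPi: "act G y Pi = lprod (W G) (\<lambda>i. inv\<^bsub>W G\<^esub> m \<otimes>\<^bsub>W G\<^esub> Q (Suc i)) p"
  proof -
    have "act G y Pi = lprod (W G) (\<lambda>i. act G y (Q i)) p"
      unfolding Pi_def using WG.lprod_hom[OF act_hom[OF y] W_group, of p Q] Q by simp
    also have "\<dots> = lprod (W G) (\<lambda>i. inv\<^bsub>W G\<^esub> m \<otimes>\<^bsub>W G\<^esub> Q (Suc i)) p"
      by (rule WG.lprod_cong) (simp add: Q_def m_def Qstep x y)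
    finally show ?thesis .
  qed
  have I1Pi: "act G y Pi = wg G y s \<otimes>\<^bsub>W G\<^esub> Pi"
    using I1[OF y Pi] by (simp add: kPi)
  have LpPi: "L p = Q p \<otimes>\<^bsub>W G\<^esub> Pi"
  proof -
    have "lprod (W G) Q (Suc p) = L p \<otimes>\<^bsub>W G\<^esub> Q 0"
      unfolding L_def Q_def by (rule WG.lprod_shift) (simp add: x y)
    moreover have "Q 0 = \<one>\<^bsub>W G\<^esub>" using x by (simp add: Q_def)
    ultimately show ?thesis using L by (simp add: Pi_def)
  qed
  have vc: "WG.central_in (Q p)"
    unfolding WG.central_in_def using kernel_central[of "Q p"] x y Q
    by (simp add: Q_def kappa_wg gcomm_center' pc_center)
  have s: "s \<in> carrier G" by (simp add: s_def)
  have wyc: "WG.central_in (wg G y s)"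
    unfolding WG.central_in_def using kernel_central[of "wg G y s"] y s
    by (simp add: kappa_wg gcomm_center'[OF sc y])
  have wys: "wg G y s \<in> carrier (W G)" using y s by simp
  have "Pi \<otimes>\<^bsub>W G\<^esub> wg G y s = wg G y s \<otimes>\<^bsub>W G\<^esub> Pi" using WG.central_comm[OF wyc Pi] by simp
  also have "\<dots> = Q p \<otimes>\<^bsub>W G\<^esub> Pi \<otimes>\<^bsub>W G\<^esub> (inv\<^bsub>W G\<^esub> m) [^]\<^bsub>W G\<^esub> p \<otimes>\<^bsub>W G\<^esub> Z p"
    using I1Pi actPi step[of p] LpPi by simp
  also have "\<dots> = Pi \<otimes>\<^bsub>W G\<^esub> (Q p \<otimes>\<^bsub>W G\<^esub> (inv\<^bsub>W G\<^esub> m) [^]\<^bsub>W G\<^esub> p \<otimes>\<^bsub>W G\<^esub> Z p)"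
    using WG.central_comm[OF vc Pi] m Pi Q Z by (simp add: WG.m_assoc)
  finally have "wg G y s = Q p \<otimes>\<^bsub>W G\<^esub> (inv\<^bsub>W G\<^esub> m) [^]\<^bsub>W G\<^esub> p \<otimes>\<^bsub>W G\<^esub> Z p"
    using m Pi Q Z wys by (simp add: WG.lcancel_iff)
  hence "m [^]\<^bsub>W G\<^esub> p \<otimes>\<^bsub>W G\<^esub> wg G y s = m [^]\<^bsub>W G\<^esub> p \<otimes>\<^bsub>W G\<^esub> Q p \<otimes>\<^bsub>W G\<^esub> inv\<^bsub>W G\<^esub> (m [^]\<^bsub>W G\<^esub> p) \<otimes>\<^bsub>W G\<^esub> Z p"
    using m Q Z by (simp add: WG.nat_pow_inv WG.m_assoc)
  also have "m [^]\<^bsub>W G\<^esub> p \<otimes>\<^bsub>W G\<^esub> Q p = Q p \<otimes>\<^bsub>W G\<^esub> m [^]\<^bsub>W G\<^esub> p"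
    using WG.central_comm[OF vc, of "m [^]\<^bsub>W G\<^esub> p"] m by simp
  also have "Q p \<otimes>\<^bsub>W G\<^esub> m [^]\<^bsub>W G\<^esub> p \<otimes>\<^bsub>W G\<^esub> inv\<^bsub>W G\<^esub> (m [^]\<^bsub>W G\<^esub> p) \<otimes>\<^bsub>W G\<^esub> Z p = Q p \<otimes>\<^bsub>W G\<^esub> Z p"
    using m Q Z by (simp add: WG.m_assoc)
  finally show ?thesis by (simp add: Z_def)
qed

end


context mpc
begin

interpretation WG: group "W G" by (rule W_group)

lemma gen_exp:
  assumes x: "x \<in> carrier G" and y: "y \<in> carrier G" and pp: "Factorial_Ring.prime p"
    and sc: "kappa G (rprod (W G) (\<lambda>i. wg G x (y [^] i)) p) \<in> group_center G"
    and sq: "kappa G (rprod (W G) (\<lambda>i. wg G x (y [^] i)) p) [^] q = \<one>"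
    and yq: "y [^] (p * q) = \<one>"
  shows "(wg G x y) [^]\<^bsub>W G\<^esub> (p * q) = \<one>\<^bsub>W G\<^esub>"
proof -
  define m where "m = wg G x y"
  define c where "c = gcomm G x y"
  define Q where "Q = (\<lambda>i::nat. wg G x (y [^] i))"
  define P where "P = (\<lambda>j. rprod (W G) (\<lambda>k. wg G x (y [^] Suc k)) j)"
  define s where "s = kappa G (rprod (W G) (\<lambda>i. wg G x (y [^] i)) p)"
  define f where "f = (\<lambda>i. wg G c (kappa G (P i)))"
  have m: "m \<in> carrier (W G)" using x y by (simp add: m_def)
  have c: "c \<in> DG" using x y by (simp add: c_def gcomm_DG)
  have Q: "\<And>i. Q i \<in> carrier (W G)" using x y by (simp add: Q_def)
  have P: "\<And>j. P j \<in> carrier (W G)" using x y by (simp add: P_def)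
  have fc: "WG.central_in (f i)" for i by (simp add: f_def wg_DG_central c kappa_DG P)
  have fcar: "f i \<in> carrier (W G)" for i using fc[of i] by (simp add: WG.central_carrier)
  have s: "s \<in> group_center G" using sc by (simp add: s_def)
  have sC: "s \<in> carrier G" by (simp add: s_def)
  have id1: "m [^]\<^bsub>W G\<^esub> p \<otimes>\<^bsub>W G\<^esub> wg G y s = Q p \<otimes>\<^bsub>W G\<^esub> rprod (W G) f p"
    using Piprime_identity[OF x y] by (simp add: m_def Q_def P_def s_def f_def c_def)
  have f0: "f 0 = \<one>\<^bsub>W G\<^esub>" using c by (simp add: f_def P_def kappa_one DG_carrier)
  have Pp: "P p = rprod (W G) Q p \<otimes>\<^bsub>W G\<^esub> Q p"
  proof -
    have "rprod (W G) Q (Suc p) = Q 0 \<otimes>\<^bsub>W G\<^esub> P p"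
      unfolding P_def Q_def by (rule WG.rprod_shift) (simp add: x y)
    moreover have "Q 0 = \<one>\<^bsub>W G\<^esub>" using x by (simp add: Q_def)
    ultimately show ?thesis using P by simp
  qed
  have kQp: "kappa G (Q p) = \<one>" using x y by (simp add: Q_def kappa_wg gcomm_center' pc_center)
  have kPp: "kappa G (P p) = s"
    using Pp Q by (simp add: kappa_mult kQp[unfolded Q_def] s_def Q_def)
  have fp: "f p = \<one>\<^bsub>W G\<^esub>" using c s by (simp add: f_def kPp wg_DG_center)
  have Zp: "(rprod (W G) f p) [^]\<^bsub>W G\<^esub> p = \<one>\<^bsub>W G\<^esub>"
  proof -
    have "(rprod (W G) f p) [^]\<^bsub>W G\<^esub> p = rprod (W G) (\<lambda>i. f i [^]\<^bsub>W G\<^esub> p) p"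
      by (rule WG.rprod_pow_central) (simp add: fc)
    also have "\<dots> = rprod (W G) (\<lambda>i. \<one>\<^bsub>W G\<^esub>) p"
      by (rule WG.rprod_cong) (simp add: f_def wg_DG_pow_p c kappa_DG P)
    also have "\<dots> = \<one>\<^bsub>W G\<^esub>" by (induction p) simp_all
    finally show ?thesis .
  qed
  have Z1: "rprod (W G) f p = \<one>\<^bsub>W G\<^esub>"
  proof (cases "p = 2")
    case True
    have "f 1 = \<one>\<^bsub>W G\<^esub>"
      using c x y by (simp add: f_def P_def kappa_wg c_def[symmetric] wg_self DG_carrier)
    then show ?thesis using True f0 by (simp add: numeral_2_eq_2)
  next
    case False
    have "p > 2" using prime_ge_2_nat[OF pp] False by simp
    hence podd: "odd p" using prime_odd_nat[OF pp] by simp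
    have id2: "m [^]\<^bsub>W G\<^esub> p \<otimes>\<^bsub>W G\<^esub> wg G y s
        = Q p \<otimes>\<^bsub>W G\<^esub> rprod (W G) (\<lambda>i. wg G (inv c) (kappa G (P (Suc i)))) p"
      using Pi_identity[OF x y] s by (simp add: m_def Q_def P_def s_def c_def)
    have Zeq: "rprod (W G) (\<lambda>i. wg G (inv c) (kappa G (P (Suc i)))) p = rprod (W G) (\<lambda>i. inv\<^bsub>W G\<^esub> (f (Suc i))) p"
      by (rule WG.rprod_cong) (simp add: f_def wg_DG_inv_left c kappa_DG P)
    have ZZ': "rprod (W G) f p = rprod (W G) (\<lambda>i. inv\<^bsub>W G\<^esub> (f (Suc i))) p"
      using id1 id2 Zeq Q fcar by (simp add: WG.lcancel_iff)
    have "rprod (W G) (\<lambda>i. inv\<^bsub>W G\<^esub> (f (Suc i))) p \<otimes>\<^bsub>W G\<^esub> rprod (W G) f p = inv\<^bsub>W G\<^esub> (f p) \<otimes>\<^bsub>W G\<^esub> f 0"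
      by (rule WG.rprod_telescope) (simp add: fc)
    hence sq2: "rprod (W G) f p \<otimes>\<^bsub>W G\<^esub> rprod (W G) f p = \<one>\<^bsub>W G\<^esub>"
      using ZZ' f0 fp by simp
    define Zp' where "Zp' = rprod (W G) f p"
    have Zc: "Zp' \<in> carrier (W G)" using fcar by (simp add: Zp'_def)
    have "even (Suc p)" using podd by simp
    then obtain k where k: "Suc p = 2 * k" by (rule evenE)
    have "Zp' = Zp' [^]\<^bsub>W G\<^esub> p \<otimes>\<^bsub>W G\<^esub> Zp'" using Zp Zc by (simp add: Zp'_def)
    also have "\<dots> = Zp' [^]\<^bsub>W G\<^esub> (Suc p)" using Zc by simp
    also have "\<dots> = (Zp' [^]\<^bsub>W G\<^esub> (2::nat)) [^]\<^bsub>W G\<^esub> k" using Zc by (simp add: k WG.nat_pow_pow)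
    also have "Zp' [^]\<^bsub>W G\<^esub> (2::nat) = \<one>\<^bsub>W G\<^esub>" using sq2 Zc by (simp add: Zp'_def numeral_2_eq_2)
    finally show ?thesis by (simp add: Zp'_def)
  qed
  have mp: "m [^]\<^bsub>W G\<^esub> p = Q p \<otimes>\<^bsub>W G\<^esub> inv\<^bsub>W G\<^esub> (wg G y s)"
    using id1 Z1 m Q y sC by (simp add: WG.inv_solve_right)
  have Qc: "WG.central_in (Q p)"
    unfolding WG.central_in_def using kernel_central[of "Q p"] x y Q
    by (simp add: Q_def kappa_wg gcomm_center' pc_center)
  have yp: "y [^] p \<in> group_center G" using y by (rule pc_center)
  have Qq: "(Q p) [^]\<^bsub>W G\<^esub> q = \<one>\<^bsub>W G\<^esub>"
  proof -
    have "Q p = inv\<^bsub>W G\<^esub> (wg G (y [^] p) x)" using wg_swap[OF x nat_pow_closed[OF y], of p] x y by (simp add: Q_def)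
    hence "(Q p) [^]\<^bsub>W G\<^esub> q = inv\<^bsub>W G\<^esub> ((wg G (y [^] p) x) [^]\<^bsub>W G\<^esub> q)"
      using x y by (simp add: WG.nat_pow_inv)
    also have "(wg G (y [^] p) x) [^]\<^bsub>W G\<^esub> q = wg G ((y [^] p) [^] q) x"
      using wg_center_pow_left[OF yp x] by simp
    also have "(y [^] p) [^] q = \<one>" using y yq by (simp add: nat_pow_pow)
    finally show ?thesis using x by simp
  qed
  have Sq: "(inv\<^bsub>W G\<^esub> (wg G y s)) [^]\<^bsub>W G\<^esub> q = \<one>\<^bsub>W G\<^esub>"
  proof -
    have "inv\<^bsub>W G\<^esub> (wg G y s) = wg G s y" using y sC wg_swap[OF sC y] by simp
    hence "(inv\<^bsub>W G\<^esub> (wg G y s)) [^]\<^bsub>W G\<^esub> q = wg G (s [^] q) y"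
      using wg_center_pow_left[OF s y] by simp
    also have "s [^] q = \<one>" using sq by (simp add: s_def)
    finally show ?thesis using y by simp
  qed
  have "m [^]\<^bsub>W G\<^esub> (p * q) = (m [^]\<^bsub>W G\<^esub> p) [^]\<^bsub>W G\<^esub> q" using m by (simp add: WG.nat_pow_pow)
  also have "\<dots> = (Q p) [^]\<^bsub>W G\<^esub> q \<otimes>\<^bsub>W G\<^esub> (inv\<^bsub>W G\<^esub> (wg G y s)) [^]\<^bsub>W G\<^esub> q"
    unfolding mp using Qc y sC by (simp add: WG.central_pow_mult)
  also have "\<dots> = \<one>\<^bsub>W G\<^esub>" using Qq Sq by simp
  finally show ?thesis by (simp add: m_def)
qed

end


lemma mod_mult_inj:
  fixes p k :: nat
  assumes pp: "Factorial_Ring.prime p" and k0: "0 < k" and kp: "k < p"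
  shows "inj_on (\<lambda>a. a * k mod p) {..<p}"
proof (rule inj_onI)
  fix a b assume a: "a \<in> {..<p}" and b: "b \<in> {..<p}" and eq: "a * k mod p = b * k mod p"
  have nd: "\<not> p dvd k" using k0 kp by (simp add: nat_dvd_not_less)
  have "p dvd (a - b)" if ba: "b \<le> a" and eq': "a * k mod p = b * k mod p" for a b :: nat
  proof -
    have "p dvd a * k - b * k" using eq' ba by (simp add: mod_eq_dvd_iff_nat)
    hence "p dvd (a - b) * k" by (simp add: diff_mult_distrib)
    then show ?thesis using pp nd by (simp add: prime_dvd_mult_iff)
  qed
  moreover have ab: "a - b < p" "b - a < p" using a b by auto
  ultimately have "b \<le> a \<Longrightarrow> a - b = 0" "a \<le> b \<Longrightarrow> b - a = 0"
    using eq nat_dvd_not_less[of "a - b" p] nat_dvd_not_less[of "b - a" p] by (metis neq0_conv)+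
  then show "a = b" by linarith
qed

lemma mod_mult_perm:
  fixes p k :: nat
  assumes pp: "Factorial_Ring.prime p" and k0: "0 < k" and kp: "k < p"
  shows "(\<lambda>a. a * k mod p) ` {..<p} = {..<p}"
proof (rule endo_inj_surj)
  show "(\<lambda>a. a * k mod p) ` {..<p} \<subseteq> {..<p}" using kp by auto
  show "inj_on (\<lambda>a. a * k mod p) {..<p}" using assms by (rule mod_mult_inj)
qed simp

context group
begin

lemma gcomm_swap: "a \<in> carrier G \<Longrightarrow> b \<in> carrier G \<Longrightarrow> gcomm G b a = inv (gcomm G a b)"
  by (simp add: gcomm_def inv_mult_group m_assoc)

lemma powform: "g \<in> carrier G \<Longrightarrow> h \<in> carrier G \<Longrightarrow>
  (g \<otimes> h) [^] (n::nat) = rprod G (\<lambda>k. conjg G (g [^] k) (gcomm G (h [^] k) g)) n \<otimes> g [^] n \<otimes> h [^] n"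
proof (induction n)
  case 0 then show ?case by simp
next
  case (Suc n)
  define R where "R = rprod G (\<lambda>k. conjg G (g [^] k) (gcomm G (h [^] k) g)) n"
  have R: "R \<in> carrier G" using Suc.prems by (simp add: R_def)
  have "(g \<otimes> h) [^] Suc n = R \<otimes> g [^] n \<otimes> h [^] n \<otimes> (g \<otimes> h)"
    using Suc by (simp add: R_def)
  also have "\<dots> = R \<otimes> conjg G (g [^] n) (gcomm G (h [^] n) g) \<otimes> g [^] Suc n \<otimes> h [^] Suc n"
    using Suc.prems R by (simp add: conjg_def gcomm_def m_assoc)
  finally show ?case by (simp add: R_def)
qed

lemma powform2: "u \<in> carrier G \<Longrightarrow> x \<in> carrier G \<Longrightarrow>
  (u \<otimes> x) [^] (n::nat) = rprod G (\<lambda>k. conjg G (x [^] k) u) n \<otimes> x [^] n"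
proof (induction n)
  case 0 then show ?case by simp
next
  case (Suc n)
  define R where "R = rprod G (\<lambda>k. conjg G (x [^] k) u) n"
  have R: "R \<in> carrier G" using Suc.prems by (simp add: R_def)
  have "(u \<otimes> x) [^] Suc n = R \<otimes> x [^] n \<otimes> (u \<otimes> x)"
    using Suc by (simp add: R_def)
  also have "\<dots> = R \<otimes> conjg G (x [^] n) u \<otimes> x [^] Suc n"
    using Suc.prems R by (simp add: conjg_def m_assoc)
  finally show ?case by (simp add: R_def)
qed

lemma conjg_hom: "g \<in> carrier G \<Longrightarrow> conjg G g \<in> hom G G"
  by (rule homI) (simp_all add: conjg_mult)

end

context mpc
begin

abbreviation DGH where "DGH \<equiv> G\<lparr>carrier := DG\<rparr>"

lemma DGH_comm_group: "comm_group DGH"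
proof -
  have "group DGH" by (rule subgroup_imp_group[OF DG_subgroup])
  then show ?thesis by (rule group.group_comm_groupI) (simp_all add: DG_comm)
qed

lemma rprod_finprod: "(\<And>i. i < n \<Longrightarrow> f i \<in> DG) \<Longrightarrow> rprod G f n = finprod DGH f {..<n}"
proof (induction n)
  case 0
  interpret H: comm_group DGH by (rule DGH_comm_group)
  show ?case by simp
next
  case (Suc n)
  interpret H: comm_group DGH by (rule DGH_comm_group)
  have "finprod DGH f {..<Suc n} = f n \<otimes> finprod DGH f {..<n}"
    using Suc.prems by (simp add: lessThan_Suc Pi_def)
  also have "\<dots> = finprod DGH f {..<n} \<otimes> f n"
  proof -
    have "finprod DGH f {..<n} \<in> carrier DGH" using Suc.prems by (intro H.finprod_closed) (simp add: Pi_def)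
    then show ?thesis using Suc.prems by (simp add: DG_comm)
  qed
  finally show ?case using Suc by simp
qed

lemma finprod_swap:
  assumes A: "finite A" and B: "finite B" and g: "\<And>a k. a \<in> A \<Longrightarrow> k \<in> B \<Longrightarrow> g a k \<in> DG"
  shows "finprod DGH (\<lambda>a. finprod DGH (\<lambda>k. g a k) B) A = finprod DGH (\<lambda>k. finprod DGH (\<lambda>a. g a k) A) B"
  using A g
proof (induction A rule: finite_induct)
  case empty
  interpret H: comm_group DGH by (rule DGH_comm_group)
  have "finprod DGH (\<lambda>k. \<one>\<^bsub>DGH\<^esub>) B = \<one>\<^bsub>DGH\<^esub>" by (rule H.finprod_one_eqI) simp
  then show ?case by simp
next
  case (insert a0 A)
  interpret H: comm_group DGH by (rule DGH_comm_group)
  have fc: "finprod DGH (\<lambda>k. g a k) B \<in> DG" if "a \<in> insert a0 A" for a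
    using H.finprod_closed[of "\<lambda>k. g a k" B] that insert.prems by (auto simp: Pi_def)
  have IH: "finprod DGH (\<lambda>a. finprod DGH (\<lambda>k. g a k) B) A = finprod DGH (\<lambda>k. finprod DGH (\<lambda>a. g a k) A) B"
    using insert.IH insert.prems by simp
  have "finprod DGH (\<lambda>a. finprod DGH (\<lambda>k. g a k) B) (insert a0 A)
      = finprod DGH (\<lambda>k. g a0 k) B \<otimes>\<^bsub>DGH\<^esub> finprod DGH (\<lambda>a. finprod DGH (\<lambda>k. g a k) B) A"
    by (rule H.finprod_insert) (use insert fc in \<open>auto simp: Pi_def\<close>)
  also have "finprod DGH (\<lambda>k. g a0 k) B \<otimes>\<^bsub>DGH\<^esub> finprod DGH (\<lambda>a. finprod DGH (\<lambda>k. g a k) B) A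
      = finprod DGH (\<lambda>k. g a0 k) B \<otimes>\<^bsub>DGH\<^esub> finprod DGH (\<lambda>k. finprod DGH (\<lambda>a. g a k) A) B"
    by (simp only: IH)
  also have "\<dots> = finprod DGH (\<lambda>k. g a0 k \<otimes>\<^bsub>DGH\<^esub> finprod DGH (\<lambda>a. g a k) A) B"
  proof (rule H.finprod_multf[symmetric])
    show "(\<lambda>k. g a0 k) \<in> B \<rightarrow> carrier DGH" using insert.prems by auto
    show "(\<lambda>k. finprod DGH (\<lambda>a. g a k) A) \<in> B \<rightarrow> carrier DGH"
    proof
      fix k assume "k \<in> B"
      then show "finprod DGH (\<lambda>a. g a k) A \<in> carrier DGH" using insert.prems by (intro H.finprod_closed) auto
    qed
  qed
  also have "\<dots> = finprod DGH (\<lambda>k. finprod DGH (\<lambda>a. g a k) (insert a0 A)) B"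
  proof (rule H.finprod_cong')
    show "(\<lambda>k. finprod DGH (\<lambda>a. g a k) (insert a0 A)) \<in> B \<rightarrow> carrier DGH"
    proof
      fix k assume "k \<in> B"
      then show "finprod DGH (\<lambda>a. g a k) (insert a0 A) \<in> carrier DGH" using insert.prems by (intro H.finprod_closed) auto
    qed
    fix k assume k: "k \<in> B"
    show "g a0 k \<otimes>\<^bsub>DGH\<^esub> finprod DGH (\<lambda>a. g a k) A = finprod DGH (\<lambda>a. g a k) (insert a0 A)"
      by (rule H.finprod_insert[symmetric]) (use insert k in auto)
  qed simp
  finally show ?case .
qed

definition zq :: "nat \<Rightarrow> 'a \<Rightarrow> bool" where
  "zq q z \<longleftrightarrow> z \<in> group_center G \<and> z [^] q = \<one>"

lemma central_in_center: "central_in z \<longleftrightarrow> z \<in> group_center G"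
  by (simp add: central_in_def group_center_def)

lemma zq_one: "zq q \<one>"
  by (simp add: zq_def center_one)

lemma zq_mult: "zq q a \<Longrightarrow> zq q b \<Longrightarrow> zq q (a \<otimes> b)"
proof -
  assume a: "zq q a" and b: "zq q b"
  have ac: "central_in a" and bc: "b \<in> carrier G" using a b by (simp_all add: zq_def central_in_center center_carrier)
  have "(a \<otimes> b) [^] q = a [^] q \<otimes> b [^] q" using ac bc by (rule central_pow_mult)
  then show ?thesis using a b by (simp add: zq_def center_mult)
qed

lemma zq_inv: "zq q a \<Longrightarrow> zq q (inv a)"
  by (simp add: zq_def center_inv nat_pow_inv center_carrier)

lemma zq_rprod: "(\<And>i. i < n \<Longrightarrow> zq q (f i)) \<Longrightarrow> zq q (rprod G f n)"
  by (induction n) (simp_all add: zq_one zq_mult)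

lemma zq_carrier: "zq q z \<Longrightarrow> z \<in> carrier G"
  by (simp add: zq_def center_carrier)

lemma zq_pow: "w \<in> carrier G \<Longrightarrow> w [^] (p * q) = \<one> \<Longrightarrow> zq q (w [^] p)"
  by (simp add: zq_def pc_center nat_pow_pow)

lemma zq_conjg: "g \<in> carrier G \<Longrightarrow> zq q z \<Longrightarrow> conjg G g z = z"
proof -
  assume g: "g \<in> carrier G" and z: "zq q z"
  have zc: "z \<in> group_center G" using z by (simp add: zq_def)
  have "conjg G g z = (g \<otimes> z) \<otimes> inv g" by (simp add: conjg_def)
  also have "g \<otimes> z = z \<otimes> g" using center_comm[OF zc g] by simp
  finally show ?thesis using g zc by (simp add: m_assoc center_carrier)
qed

end


context mpc
begin

lemma rprod_DG: "(\<And>i. i < n \<Longrightarrow> f i \<in> DG) \<Longrightarrow> rprod G f n \<in> DG"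
  by (induction n) (simp_all add: DG_one DG_mult)

lemma rprod_inv_DG: "(\<And>i. i < n \<Longrightarrow> f i \<in> DG) \<Longrightarrow> rprod G (\<lambda>i. inv (f i)) n = inv (rprod G f n)"
proof (induction n)
  case 0 then show ?case by simp
next
  case (Suc n)
  have r: "rprod G f n \<in> DG" using Suc.prems by (simp add: rprod_DG)
  have fn: "f n \<in> DG" using Suc.prems by simp
  have "rprod G (\<lambda>i. inv (f i)) (Suc n) = inv (rprod G f n) \<otimes> inv (f n)" using Suc by simp
  also have "\<dots> = inv (f n \<otimes> rprod G f n)" using r fn by (simp add: inv_mult_group DG_carrier)
  also have "f n \<otimes> rprod G f n = rprod G f n \<otimes> f n" using r fn by (simp add: DG_comm)
  finally show ?case by simp
qed

lemma gcomm_central_right: "x \<in> carrier G \<Longrightarrow> z \<in> group_center G \<Longrightarrow> w \<in> carrier G \<Longrightarrow>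
    gcomm G x (z \<otimes> w) = gcomm G x w"
proof -
  assume x: "x \<in> carrier G" and z: "z \<in> group_center G" and w: "w \<in> carrier G"
  have zc: "z \<in> carrier G" using z by (rule center_carrier)
  have cz: "conjg G z a = a" if "a \<in> carrier G" for a
    using that zc center_comm[OF z that] by (simp add: conjg_def m_assoc[symmetric]) (simp add: m_assoc)
  show ?thesis using x zc w gcomm_right[OF x zc w] by (simp add: cz gcomm_center'[OF z x])
qed

theorem s_zq:
  assumes x: "x \<in> carrier G" and y: "y \<in> carrier G" and pp: "Factorial_Ring.prime p"
    and ex: "\<And>g. g \<in> carrier G \<Longrightarrow> g [^] (p * q) = \<one>"
  shows "zq q (rprod G (\<lambda>i. gcomm G x (y [^] i)) p)"
proof -
  interpret H: comm_group DGH by (rule DGH_comm_group)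
  define t where "t = (\<lambda>n::nat. gcomm G x (y [^] n))"
  have t: "t n \<in> DG" for n using x y by (simp add: t_def gcomm_DG)
  have tc: "t n \<in> carrier G" for n using t[of n] by (rule DG_carrier)
  have p0: "0 < p" using prime_gt_1_nat[OF pp] by simp
  have t_mod: "t n = t (n mod p)" for n
  proof -
    have "y [^] n = y [^] (p * (n div p) + n mod p)" by simp
    also have "\<dots> = (y [^] p) [^] (n div p) \<otimes> y [^] (n mod p)" using y by (simp add: nat_pow_mult nat_pow_pow)
    finally show ?thesis
      unfolding t_def using gcomm_central_right[OF x center_pow[OF pc_center[OF y]] nat_pow_closed[OF y]] by simp
  qed
  define s where "s = rprod G t p"
  have s: "s \<in> DG" by (simp add: s_def rprod_DG t)
  have sH: "s = finprod DGH t {..<p}" unfolding s_def by (rule rprod_finprod) (simp add: t)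
  define F where "F = (\<lambda>a. rprod G (\<lambda>k. conjg G (x [^] k) (t (a * k))) p)"
  have Fz: "zq q (F a)" for a
  proof -
    have ya: "y [^] a \<in> carrier G" using y by simp
    define R where "R = rprod G (\<lambda>k. conjg G (x [^] k) (gcomm G ((y [^] a) [^] k) x)) p"
    have R: "R \<in> carrier G" using x y by (simp add: R_def)
    have pf: "(x \<otimes> y [^] a) [^] p = R \<otimes> x [^] p \<otimes> (y [^] a) [^] p"
      using powform[OF x ya] by (simp add: R_def)
    have Req: "R = (x \<otimes> y [^] a) [^] p \<otimes> inv ((y [^] a) [^] p) \<otimes> inv (x [^] p)"
      using pf R x ya by (simp add: m_assoc)
    have zR: "zq q R"
      unfolding Req using x ya ex
      by (intro zq_mult zq_inv zq_pow) (simp_all add: nat_pow_closed)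
    have "R = rprod G (\<lambda>k. inv (conjg G (x [^] k) (t (a * k)))) p"
      unfolding R_def
    proof (rule rprod_cong)
      fix k assume "k < p"
      have "gcomm G ((y [^] a) [^] k) x = inv (gcomm G x ((y [^] a) [^] k))"
        using x ya by (intro gcomm_swap) auto
      then show "conjg G (x [^] k) (gcomm G ((y [^] a) [^] k) x) = inv (conjg G (x [^] k) (t (a * k)))"
        using x y by (simp add: t_def conjg_inv nat_pow_pow)
    qed
    also have "\<dots> = inv (F a)"
      unfolding F_def by (rule rprod_inv_DG) (simp add: DG_conjg t x)
    finally have "zq q (inv (F a))" using zR by simp
    then have "zq q (inv (inv (F a)))" by (rule zq_inv)
    then show ?thesis using x by (simp add: F_def t DG_carrier DG_conjg)
  qed
  have zall: "zq q (rprod G F p)" by (rule zq_rprod) (simp add: Fz)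
  define E where "E = (\<lambda>k. finprod DGH (\<lambda>a. t (a * k)) {..<p})"
  have E: "E k \<in> DG" for k unfolding E_def using H.finprod_closed[of "\<lambda>a. t (a * k)" "{..<p}"] t by auto
  have F_H: "F a = finprod DGH (\<lambda>k. conjg G (x [^] k) (t (a * k))) {..<p}" for a
    unfolding F_def by (rule rprod_finprod) (simp add: DG_conjg t x)
  have "rprod G F p = finprod DGH F {..<p}"
    by (rule rprod_finprod) (simp add: F_def rprod_DG DG_conjg t x)
  also have "\<dots> = finprod DGH (\<lambda>a. finprod DGH (\<lambda>k. conjg G (x [^] k) (t (a * k))) {..<p}) {..<p}"
  proof -
    have "F = (\<lambda>a. finprod DGH (\<lambda>k. conjg G (x [^] k) (t (a * k))) {..<p})" by (rule ext) (rule F_H)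
    then show ?thesis by (simp only:)
  qed
  also have "\<dots> = finprod DGH (\<lambda>k. finprod DGH (\<lambda>a. conjg G (x [^] k) (t (a * k))) {..<p}) {..<p}"
    by (rule finprod_swap) (simp_all add: DG_conjg t x)
  also have "\<dots> = finprod DGH (\<lambda>k. conjg G (x [^] k) (E k)) {..<p}"
  proof (rule H.finprod_cong')
    show "(\<lambda>k. conjg G (x [^] k) (E k)) \<in> {..<p} \<rightarrow> carrier DGH" using E x by (simp add: DG_conjg)
    fix k assume "k \<in> {..<p}"
    have "finprod DGH (\<lambda>a. conjg G (x [^] k) (t (a * k))) {..<p} = rprod G (\<lambda>a. conjg G (x [^] k) (t (a * k))) p"
      by (rule rprod_finprod[symmetric]) (simp add: DG_conjg t x)
    also have "\<dots> = conjg G (x [^] k) (rprod G (\<lambda>a. t (a * k)) p)"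
      using rprod_hom[OF conjg_hom[OF nat_pow_closed[OF x]] is_group, of p "\<lambda>a. t (a * k)"] tc by simp
    also have "rprod G (\<lambda>a. t (a * k)) p = E k"
      unfolding E_def by (rule rprod_finprod) (simp add: t)
    finally show "finprod DGH (\<lambda>a. conjg G (x [^] k) (t (a * k))) {..<p} = conjg G (x [^] k) (E k)" .
  qed simp
  also have "\<dots> = rprod G (\<lambda>k. conjg G (x [^] k) (E k)) p"
    by (rule rprod_finprod[symmetric]) (simp add: DG_conjg E x)
  finally have zE: "zq q (rprod G (\<lambda>k. conjg G (x [^] k) (E k)) p)" using zall by simp
  have E0: "E 0 = \<one>"
  proof -
    have "t 0 = \<one>" using x by (simp add: t_def gcomm_def)
    then have "E 0 = finprod DGH (\<lambda>a. \<one>\<^bsub>DGH\<^esub>) {..<p}" by (simp add: E_def)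
    also have "\<dots> = \<one>\<^bsub>DGH\<^esub>" by (rule H.finprod_one_eqI) simp
    finally show ?thesis by simp
  qed
  have Ek: "E k = s" if k: "0 < k" "k < p" for k
  proof -
    have "E k = finprod DGH (\<lambda>a. t (a * k mod p)) {..<p}"
      unfolding E_def by (rule H.finprod_cong') (auto simp add: t t_mod[symmetric])
    also have "\<dots> = finprod DGH t ((\<lambda>a. a * k mod p) ` {..<p})"
      by (rule H.finprod_reindex[symmetric]) (simp_all add: t mod_mult_inj[OF pp k])
    also have "(\<lambda>a. a * k mod p) ` {..<p} = {..<p}" using pp k by (rule mod_mult_perm)
    finally show ?thesis using sH by simp
  qed
  obtain p' where p': "p = Suc p'" using p0 by (cases p) auto
  define M where "M = rprod G (\<lambda>k. conjg G (x [^] Suc k) s) p'"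
  have M: "M \<in> carrier G" using x s by (simp add: M_def DG_carrier)
  have "rprod G (\<lambda>k. conjg G (x [^] k) (E k)) p = conjg G (x [^] (0::nat)) (E 0) \<otimes> rprod G (\<lambda>k. conjg G (x [^] Suc k) (E (Suc k))) p'"
    unfolding p' by (rule rprod_shift) (simp add: x E DG_carrier)
  also have "rprod G (\<lambda>k. conjg G (x [^] Suc k) (E (Suc k))) p' = M"
    unfolding M_def by (rule rprod_cong) (simp add: Ek p')
  finally have zM: "zq q M" using zE E0 M x by simp
  define N where "N = rprod G (\<lambda>k. conjg G (x [^] k) s) p"
  have "N = conjg G (x [^] (0::nat)) s \<otimes> M"
    unfolding N_def M_def p' by (rule rprod_shift) (simp add: x s DG_carrier)
  hence NsM: "N = s \<otimes> M" using s by (simp add: DG_carrier)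
  have "(s \<otimes> x) [^] p = N \<otimes> x [^] p" using powform2[OF DG_carrier[OF s] x] by (simp add: N_def)
  hence "N = (s \<otimes> x) [^] p \<otimes> inv (x [^] p)" using x s M by (simp add: NsM m_assoc DG_carrier)
  hence zN: "zq q N" using x s ex by (simp add: zq_mult zq_inv zq_pow DG_carrier)
  have "s = N \<otimes> inv M" using NsM M s by (simp add: m_assoc DG_carrier)
  hence "zq q s" using zN zM by (simp add: zq_mult zq_inv)
  then show ?thesis by (simp add: s_def t_def)
qed

end


lemma group_exponent_dvd:
  assumes M: "group M" and e: "0 < e" and ex: "\<And>x. x \<in> carrier M \<Longrightarrow> x [^]\<^bsub>M\<^esub> e = \<one>\<^bsub>M\<^esub>"
  shows "group_exponent M dvd e"
proof -
  interpret M: group M by (rule M)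
  have ex': "\<exists>n::nat>0. \<forall>x \<in> carrier M. x [^]\<^bsub>M\<^esub> n = \<one>\<^bsub>M\<^esub>" using e ex by blast
  define d where "d = (LEAST n::nat. n > 0 \<and> (\<forall>x \<in> carrier M. x [^]\<^bsub>M\<^esub> n = \<one>\<^bsub>M\<^esub>))"
  have gd: "group_exponent M = d" using ex' by (simp add: group_exponent_def d_def)
  have d: "d > 0 \<and> (\<forall>x \<in> carrier M. x [^]\<^bsub>M\<^esub> d = \<one>\<^bsub>M\<^esub>)"
    unfolding d_def by (rule LeastI_ex) (use ex' in blast)
  have r: "x [^]\<^bsub>M\<^esub> (e mod d) = \<one>\<^bsub>M\<^esub>" if x: "x \<in> carrier M" for x
  proof -
    have "\<one>\<^bsub>M\<^esub> = x [^]\<^bsub>M\<^esub> (d * (e div d) + e mod d)" using ex[OF x] by simp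
    also have "\<dots> = (x [^]\<^bsub>M\<^esub> d) [^]\<^bsub>M\<^esub> (e div d) \<otimes>\<^bsub>M\<^esub> x [^]\<^bsub>M\<^esub> (e mod d)"
      using x by (simp add: M.nat_pow_mult M.nat_pow_pow)
    finally show ?thesis using d x by simp
  qed
  have "e mod d = 0"
  proof (rule ccontr)
    assume "e mod d \<noteq> 0"
    hence "e mod d > 0 \<and> (\<forall>x \<in> carrier M. x [^]\<^bsub>M\<^esub> (e mod d) = \<one>\<^bsub>M\<^esub>)" using r by auto
    hence "d \<le> e mod d" unfolding d_def by (rule Least_le)
    moreover have "e mod d < d" using d by simp
    ultimately show False by simp
  qed
  then show ?thesis using gd by auto
qed

lemma group_exponent_props:
  assumes M: "group M" and fin: "finite (carrier M)"
  shows "group_exponent M > 0" "\<And>x. x \<in> carrier M \<Longrightarrow> x [^]\<^bsub>M\<^esub> group_exponent M = \<one>\<^bsub>M\<^esub>"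
    "group_exponent M dvd order M"
proof -
  interpret M: group M by (rule M)
  have o: "order M > 0" using fin M.one_closed unfolding order_def by (metis card_gt_0_iff empty_iff)
  have ex': "\<exists>n::nat>0. \<forall>x \<in> carrier M. x [^]\<^bsub>M\<^esub> n = \<one>\<^bsub>M\<^esub>"
    using o M.pow_order_eq_1 by blast
  define d where "d = (LEAST n::nat. n > 0 \<and> (\<forall>x \<in> carrier M. x [^]\<^bsub>M\<^esub> n = \<one>\<^bsub>M\<^esub>))"
  have gd: "group_exponent M = d" using ex' by (simp add: group_exponent_def d_def)
  have d: "d > 0 \<and> (\<forall>x \<in> carrier M. x [^]\<^bsub>M\<^esub> d = \<one>\<^bsub>M\<^esub>)"
    unfolding d_def by (rule LeastI_ex) (use ex' in blast)
  show "group_exponent M > 0" using d gd by simp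
  show "\<And>x. x \<in> carrier M \<Longrightarrow> x [^]\<^bsub>M\<^esub> group_exponent M = \<one>\<^bsub>M\<^esub>" using d gd by simp
  show "group_exponent M dvd order M"
    by (rule group_exponent_dvd[OF M o]) (rule M.pow_order_eq_1)
qed

context group
begin

lemma tri_sum: "2 * (\<Sum>i<n. i) = n * (n - (1::nat))"
  by (induction n) (auto simp add: algebra_simps)

lemma class2_pow:
  assumes a: "a \<in> carrier G" and b: "b \<in> carrier G"
    and zc: "central_in (b \<otimes> a \<otimes> inv b \<otimes> inv a)"
  shows "(a \<otimes> b) [^] (n::nat) = a [^] n \<otimes> b [^] n \<otimes> (b \<otimes> a \<otimes> inv b \<otimes> inv a) [^] (\<Sum>i<n. i)"
proof -
  define z where "z = b \<otimes> a \<otimes> inv b \<otimes> inv a"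
  have z: "z \<in> carrier G" and zc': "central_in z" using a b zc by (simp_all add: z_def)
  have ba: "b \<otimes> a = z \<otimes> a \<otimes> b" using a b by (simp add: z_def m_assoc)
  have bna: "b [^] k \<otimes> a = z [^] k \<otimes> a \<otimes> b [^] k" for k :: nat
  proof (induction k)
    case 0 then show ?case using a by simp
  next
    case (Suc k)
    have "b [^] Suc k \<otimes> a = b [^] k \<otimes> (b \<otimes> a)" using a b by (simp add: m_assoc)
    also have "\<dots> = b [^] k \<otimes> (z \<otimes> a \<otimes> b)" by (simp add: ba)
    also have "\<dots> = z \<otimes> (b [^] k \<otimes> a) \<otimes> b"
      using central_comm[OF zc', of "b [^] k"] a b z by (simp add: m_assoc[symmetric])
    also have "\<dots> = z \<otimes> (z [^] k \<otimes> a \<otimes> b [^] k) \<otimes> b" using Suc by simp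
    also have "\<dots> = (z \<otimes> z [^] k) \<otimes> a \<otimes> (b [^] k \<otimes> b)" using a b z by (simp add: m_assoc)
    also have "z \<otimes> z [^] k = z [^] Suc k" by (simp only: nat_pow_Suc2[OF z])
    also have "b [^] k \<otimes> b = b [^] Suc k" by simp
    finally show ?case .
  qed
  show ?thesis unfolding z_def[symmetric]
  proof (induction n)
    case 0 then show ?case by simp
  next
    case (Suc n)
    have "(a \<otimes> b) [^] Suc n = a [^] n \<otimes> b [^] n \<otimes> z [^] (\<Sum>i<n. i) \<otimes> (a \<otimes> b)" using Suc by simp
    also have "\<dots> = a [^] n \<otimes> (b [^] n \<otimes> a) \<otimes> b \<otimes> z [^] (\<Sum>i<n. i)"
      using central_comm[OF central_in_pow[OF zc'], of "a \<otimes> b" "\<Sum>i<n. i"] a b z by (simp add: m_assoc)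
    also have "\<dots> = a [^] n \<otimes> (z [^] n \<otimes> a \<otimes> b [^] n) \<otimes> b \<otimes> z [^] (\<Sum>i<n. i)" by (simp add: bna)
    also have "\<dots> = a [^] n \<otimes> (z [^] n \<otimes> (a \<otimes> b [^] n \<otimes> b)) \<otimes> z [^] (\<Sum>i<n. i)"
      using a b z by (simp add: m_assoc)
    also have "z [^] n \<otimes> (a \<otimes> b [^] n \<otimes> b) = (a \<otimes> b [^] n \<otimes> b) \<otimes> z [^] n"
      using central_comm[OF central_in_pow[OF zc'], of "a \<otimes> b [^] n \<otimes> b" n] a b by simp
    also have "a [^] n \<otimes> (a \<otimes> b [^] n \<otimes> b \<otimes> z [^] n) \<otimes> z [^] (\<Sum>i<n. i)
        = a [^] n \<otimes> a \<otimes> (b [^] n \<otimes> b) \<otimes> (z [^] n \<otimes> z [^] (\<Sum>i<n. i))"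
      using a b z by (simp add: m_assoc)
    also have "\<dots> = a [^] Suc n \<otimes> b [^] Suc n \<otimes> z [^] (\<Sum>i<Suc n. i)"
      using z by (simp add: nat_pow_mult add.commute)
    finally show ?case .
  qed
qed

end


context mpc
begin

lemma main_mpc:
  assumes pp: "Factorial_Ring.prime p" and fin: "finite (carrier G)" and ord: "\<exists>n. order G = p ^ n"
  shows "group_exponent (W G) dvd group_exponent G"
proof -
  interpret WG: group "W G" by (rule W_group)
  have grp: "group G" by (rule is_group)
  define e where "e = group_exponent G"
  have e0: "e > 0" and ex: "\<And>g. g \<in> carrier G \<Longrightarrow> g [^] e = \<one>" and edvd: "e dvd order G"
    using group_exponent_props[OF grp fin] by (auto simp: e_def)
  obtain k where k: "order G = p ^ k" using ord by blast
  obtain n where n: "e = p ^ n" using edvd k divides_primepow_nat[OF pp] by auto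
  have main: "w [^]\<^bsub>W G\<^esub> e = \<one>\<^bsub>W G\<^esub>" if w: "w \<in> carrier (W G)" for w
  proof (cases n)
    case 0
    then have e1: "e = 1" using n by simp
    have triv: "g = \<one>" if "g \<in> carrier G" for g using ex[OF that] e1 that by simp
    have "w = \<one>\<^bsub>W G\<^esub>" using w
    proof (induction rule: W_induct)
      case one then show ?case by simp
    next
      case (mul A g h) then show ?case by (simp add: triv[of g] triv[of h])
    next
      case (mulinv A g h) then show ?case by (simp add: triv[of g] triv[of h])
    qed
    then show ?thesis using e1 by simp
  next
    case (Suc n')
    define q where "q = p ^ n'"
    have epq: "e = p * q" using n Suc by (simp add: q_def)
    have exq: "\<And>g. g \<in> carrier G \<Longrightarrow> g [^] (p * q) = \<one>" using ex epq by simp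
    have gen: "(wg G x y) [^]\<^bsub>W G\<^esub> e = \<one>\<^bsub>W G\<^esub>" if x: "x \<in> carrier G" and y: "y \<in> carrier G" for x y
    proof -
      have ks: "kappa G (rprod (W G) (\<lambda>i. wg G x (y [^] i)) p) = rprod G (\<lambda>i. gcomm G x (y [^] i)) p"
        using WG.rprod_hom[OF kappa_hom is_group, of p "\<lambda>i. wg G x (y [^] i)"] x y
        by (simp add: kappa_wg)
      have z: "zq q (rprod G (\<lambda>i. gcomm G x (y [^] i)) p)" using s_zq[OF x y pp exq] .
      show ?thesis unfolding epq
        by (rule gen_exp[OF x y pp]) (use z ks exq y in \<open>simp_all add: zq_def\<close>)
    qed
    have Tz: "z [^]\<^bsub>W G\<^esub> (\<Sum>i<e. i) = \<one>\<^bsub>W G\<^esub>"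
      if z: "z \<in> carrier (W G)" "z [^]\<^bsub>W G\<^esub> p = \<one>\<^bsub>W G\<^esub>" and nt: "\<not> (p = 2 \<and> q = 1)" for z
    proof -
      have T2: "2 * (\<Sum>i<e. i) = e * (e - 1)" by (rule tri_sum)
      have "p dvd (\<Sum>i<e. i)"
      proof (cases "p = 2")
        case True
        then have "q \<noteq> 1" using nt by simp
        moreover have "q = 2 ^ n'" using True by (simp add: q_def)
        ultimately obtain r where "q = 2 * r" by (metis One_nat_def Suc_pred dvd_def neq0_conv power_0 power_Suc zero_less_power zero_neq_numeral)
        then have "2 * (\<Sum>i<e. i) = 2 * (2 * r * (4 * r - 1))" using T2 epq True by (simp add: algebra_simps)
        then show ?thesis using True by simp
      next
        case False
        have "p dvd 2 * (\<Sum>i<e. i)" using T2 epq by simp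
        moreover have "\<not> p dvd 2"
          using False prime_ge_2_nat[OF pp] by (metis dvd_imp_le le_antisym zero_less_numeral)
        ultimately show ?thesis using pp by (simp add: prime_dvd_mult_iff)
      qed
      then obtain r where r: "(\<Sum>i<e. i) = p * r" by (auto simp add: dvd_def)
      show ?thesis using z by (simp add: r WG.nat_pow_pow[symmetric])
    qed
    have closure: "(A \<otimes>\<^bsub>W G\<^esub> B) [^]\<^bsub>W G\<^esub> e = \<one>\<^bsub>W G\<^esub>"
      if A: "A \<in> carrier (W G)" "A [^]\<^bsub>W G\<^esub> e = \<one>\<^bsub>W G\<^esub>"
        and B: "B \<in> carrier (W G)" "B [^]\<^bsub>W G\<^esub> e = \<one>\<^bsub>W G\<^esub>" for A B
    proof -
      define z where "z = B \<otimes>\<^bsub>W G\<^esub> A \<otimes>\<^bsub>W G\<^esub> inv\<^bsub>W G\<^esub> B \<otimes>\<^bsub>W G\<^esub> inv\<^bsub>W G\<^esub> A"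
      have zc: "WG.central_in z" and zp: "z [^]\<^bsub>W G\<^esub> p = \<one>\<^bsub>W G\<^esub>"
        using W_commutator[OF B(1) A(1)] by (simp_all add: z_def)
      have zC: "z \<in> carrier (W G)" using A B by (simp add: z_def)
      have "(A \<otimes>\<^bsub>W G\<^esub> B) [^]\<^bsub>W G\<^esub> e = z [^]\<^bsub>W G\<^esub> (\<Sum>i<e. i)"
        using WG.class2_pow[OF A(1) B(1)] zc A B by (simp add: z_def)
      also have "\<dots> = \<one>\<^bsub>W G\<^esub>"
      proof (cases "p = 2 \<and> q = 1")
        case False then show ?thesis using Tz[OF zC zp] by simp
      next
        case True
        then have e2: "e = 2" using epq by simp
        have inv_self: "inv g = g" if g: "g \<in> carrier G" for g
        proof -
          have "g \<otimes> g = \<one>" using ex[OF g] e2 g by (simp add: numeral_2_eq_2)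
          then show ?thesis using g by (simp add: inv_equality)
        qed
        have gc1: "gcomm G g h = \<one>" if "g \<in> carrier G" "h \<in> carrier G" for g h
        proof -
          have "gcomm G g h = (g \<otimes> h) \<otimes> (g \<otimes> h)" using that by (simp add: gcomm_def inv_self m_assoc)
          also have "\<dots> = \<one>" using ex[of "g \<otimes> h"] e2 that by (simp add: numeral_2_eq_2)
          finally show ?thesis .
        qed
        have k1: "kappa G V = \<one>" if "V \<in> carrier (W G)" for V
          using that
        proof (induction rule: W_induct)
          case one then show ?case by (simp add: kappa_one)
        next
          case (mul A g h) then show ?case by (simp add: kappa_mult kappa_wg gc1)
        next
          case (mulinv A g h) then show ?case by (simp add: kappa_mult kappa_inv kappa_wg gc1)
        qed
        have "z = wg G (kappa G B) (kappa G A)" using comm_W[OF B(1) A(1)] by (simp add: z_def)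
        also have "\<dots> = \<one>\<^bsub>W G\<^esub>" using k1[OF A(1)] k1[OF B(1)] by simp
        finally show ?thesis by simp
      qed
      finally show ?thesis .
    qed
    show ?thesis using w
    proof (induction rule: W_induct)
      case one then show ?case by simp
    next
      case (mul A g h) then show ?case by (simp add: closure gen)
    next
      case (mulinv A g h)
      have "(inv\<^bsub>W G\<^esub> (wg G g h)) [^]\<^bsub>W G\<^esub> e = \<one>\<^bsub>W G\<^esub>"
        using gen[of g h] mulinv by (simp add: WG.nat_pow_inv)
      then show ?case using mulinv by (simp add: closure)
    qed
  qed
  show ?thesis using group_exponent_dvd[OF W_group e0 main] by (simp add: e_def)
qed

end

theorem theorem6p1:
  fixes G :: "('a, 'b) monoid_scheme" and p :: nat
  assumes "Factorial_Ring.prime p"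
    and "finite_p_group G p"
    and "metabelian G"
    and "p_central G p"
  shows "group_exponent (exterior_square G) dvd group_exponent G"
proof -
  have grp: "group G" and fin: "finite (carrier G)" and ord: "\<exists>n. order G = p ^ n"
    using assms(2) unfolding finite_p_group_def by auto
  interpret mpc G p by (rule mpc.intro[OF grp]) (rule mpc_axioms.intro[OF assms(3,4)])
  show ?thesis using main_mpc[OF assms(1) fin ord] by simp
qed


end
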